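(* Assume conditions (C), (D1), (D2), (E1), (E2), and let $u_n(k)=y_n(k)-m_ny_n(k-1)-\omega_n$. Then $$\frac1{nc_n}\sum_{k=1}^nu_n^2(k)\xrightarrow{p}0\qquad(n\to\infty).$$
   Context: For each $n$, $\{\xi_n(k,j)\}$, $\{\eta_n(k)\}$ are independent families of i.i.d. $\mathbb N$-valued random variables with generating functions $g_n,h_n$, finite means $m_n,\omega_n$; $y_n(0)=0$, $y_n(k)=\sum_{j=1}^{y_n(k-1)}\xi_n(k,j)+\eta_n(k)$. $(c_n)$ positive; $G_n(\lambda)=n^2[(1-m_n\lambda/c_n)-g_n(1-\lambda/c_n)]$, $H_n(\lambda)=n[(1-\omega_n\lambda/c_n)-h_n(1-\lambda/c_n)]$. Conditions: (C) $n/c_n\to\infty$, $n/c_n^2\to\gamma_0\ge0$; (D1) $n(m_n-1)\to a$; (D2) $G_n$ uniformly Lipschitz on bounded intervals, converging to a continuous function; (E1) $\omega_n\to\omega\ge0$; (E2) $H_n$ uniformly Lipschitz on bounded intervals, converging to a continuous function. *)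

theory Defs
  imports "HOL-Probability.Probability"
begin

definition pgf :: "nat pmf \<Rightarrow> real \<Rightarrow> real" where
  "pgf p s = measure_pmf.expectation p (\<lambda>k. s ^ k)"

definition pmean :: "nat pmf \<Rightarrow> real" where
  "pmean p = measure_pmf.expectation p real"

fun bpi :: "(nat \<Rightarrow> nat \<Rightarrow> 'a \<Rightarrow> nat) \<Rightarrow> (nat \<Rightarrow> 'a \<Rightarrow> nat) \<Rightarrow> nat \<Rightarrow> 'a \<Rightarrow> nat" where
  "bpi xi eta 0 x = 0"
| "bpi xi eta (Suc k) x = (\<Sum>j\<in>{1..bpi xi eta k x}. xi (Suc k) j x) + eta (Suc k) x"

end

theory Submission
  imports Defs
begin

definition phi :: "real \<Rightarrow> nat \<Rightarrow> real" where
  "phi t k = (1 - t) ^ k - 1 + real k * t"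

lemma pow_aux1:
  fixes t :: real assumes "0 \<le> t" "t \<le> 1"
  shows "real k * t * (1 - t) ^ k \<le> 1 - (1 - t) ^ k"
proof (induction k)
  case 0 then show ?case by simp
next
  case (Suc k)
  have a: "(1 - t) ^ Suc k \<le> (1 - t) ^ k"
    using assms by (simp add: mult_left_le_one_le)
  have b: "0 \<le> (1 - t) ^ k" using assms by simp
  have "real (Suc k) * t * (1 - t) ^ Suc k = real k * t * (1 - t) ^ Suc k + t * (1 - t) ^ Suc k"
    by (simp add: algebra_simps)
  also have "\<dots> \<le> real k * t * (1 - t) ^ k + t * (1 - t) ^ k"
    using a assms by (intro add_mono mult_left_mono) auto
  also have "\<dots> \<le> 1 - (1 - t) ^ k + t * (1 - t) ^ k" using Suc by simp
  also have "\<dots> = 1 - (1 - t) ^ Suc k" by (simp add: algebra_simps)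
  finally show ?case .
qed

lemma phi_lower2:
  fixes t :: real assumes "0 \<le> t" "t \<le> 1"
  shows "t^2 * (1 - t) ^ k * (real k * (real k - 1)) / 2 \<le> phi t k"
proof (induction k)
  case 0 then show ?case by (simp add: phi_def)
next
  case (Suc k)
  have a: "(1 - t) ^ Suc k \<le> (1 - t) ^ k"
    using assms by (simp add: mult_left_le_one_le)
  have b: "0 \<le> (1 - t) ^ Suc k" using assms by simp
  have rec: "phi t (Suc k) = phi t k + t * (1 - (1 - t) ^ k)"
    by (simp add: phi_def algebra_simps)
  have kk: "0 \<le> real k * (real k - 1)" by (cases k) auto
  have "t^2 * (1 - t) ^ Suc k * (real (Suc k) * (real (Suc k) - 1)) / 2
      = t^2 * (1 - t) ^ Suc k * (real k * (real k - 1)) / 2 + t * (real k * t * (1 - t) ^ Suc k)"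
  proof -
    define a where "a = (1 - t) ^ Suc k"
    have "t^2 * a * (real (Suc k) * (real (Suc k) - 1)) / 2 = t^2 * a * (real k * (real k - 1)) / 2 + t * (real k * t * a)"
      by (simp add: field_simps power2_eq_square)
    then show ?thesis by (simp add: a_def)
  qed
  also have "\<dots> \<le> t^2 * (1 - t) ^ k * (real k * (real k - 1)) / 2 + t * (real k * t * (1 - t) ^ k)"
    using a assms kk
    by (intro add_mono divide_right_mono mult_left_mono mult_right_mono) auto
  also have "\<dots> \<le> phi t k + t * (1 - (1 - t) ^ k)"
    using Suc pow_aux1[OF assms, of k] assms by (intro add_mono mult_left_mono) auto
  finally show ?case using rec by simp
qed

lemma phi_lower1: "0 \<le> t \<Longrightarrow> t \<le> 1 \<Longrightarrow> real k * t - 1 \<le> phi t k"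
  by (simp add: phi_def)

lemma phi_nonneg: "0 \<le> t \<Longrightarrow> t \<le> 1 \<Longrightarrow> 0 \<le> phi t k"
proof -
  assume "0 \<le> t" "t \<le> 1"
  then show ?thesis using phi_lower2[of t k]
  proof -
    have "0 \<le> real k * (real k - 1)" by (cases k) auto
    moreover have "0 \<le> (1 - t) ^ k" using \<open>t \<le> 1\<close> by simp
    ultimately have "0 \<le> t^2 * (1 - t) ^ k * (real k * (real k - 1)) / 2" by simp
    then show ?thesis using phi_lower2[of t k] \<open>0 \<le> t\<close> \<open>t \<le> 1\<close> by linarith
  qed
qed

lemma pow_lower_exp:
  fixes c :: real assumes c: "2 \<le> c" and k: "real k \<le> 2 * c"
  shows "exp (-4) \<le> (1 - 1/c) ^ k"
proof -
  let ?t = "1/c"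
  have t0: "0 \<le> ?t" "?t \<le> 1/2" using c by auto
  have l: "- ?t - 2 * ?t\<^sup>2 \<le> ln (1 - ?t)" by (rule ln_one_minus_pos_lower_bound[OF t0])
  have pos: "0 < 1 - ?t" using c by simp
  have "(1 - ?t) ^ k = exp (real k * ln (1 - ?t))"
    using pos by (simp add: exp_of_nat_mult)
  moreover have "-4 \<le> real k * ln (1 - ?t)"
  proof -
    have "real k * (- ?t - 2 * ?t\<^sup>2) \<le> real k * ln (1 - ?t)"
      using l by (intro mult_left_mono) auto
    moreover have "-4 \<le> real k * (- ?t - 2 * ?t\<^sup>2)"
    proof -
      have "real k * (?t + 2 * ?t\<^sup>2) \<le> 2 * c * (?t + 2 * ?t\<^sup>2)"
        using k t0 by (intro mult_right_mono) auto
      also have "\<dots> = 2 + 4 / c" using c by (simp add: field_simps power2_eq_square)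
      also have "\<dots> \<le> 4" using c by (simp add: field_simps)
      finally have "real k * (?t + 2 * ?t\<^sup>2) \<le> 4" .
      moreover have "real k * (- ?t - 2 * ?t\<^sup>2) = - (real k * (?t + 2 * ?t\<^sup>2))" by (simp add: algebra_simps)
      ultimately show ?thesis by linarith
    qed
    ultimately show ?thesis by linarith
  qed
  ultimately show ?thesis by simp
qed

lemma half_le_aux: "(x::real) - 1 \<le> y \<Longrightarrow> 2 \<le> x \<Longrightarrow> x / 2 \<le> y" by linarith

lemma phi_bounds:
  fixes c R :: real assumes c: "2 \<le> c" and R: "2 \<le> R"
  shows "R * c \<le> real k \<Longrightarrow> real k \<le> 2 * c * phi (1/c) k"
    and "R * c \<le> real k \<Longrightarrow> 1 \<le> (2 / R) * phi (1/c) k"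
    and "real k < R * c \<Longrightarrow> real k * (real k - 1) \<le> (2 * exp 4 + 2 * R) * c\<^sup>2 * phi (1/c) k"
proof -
  have t: "0 \<le> 1/c" "1/c \<le> 1" using c by auto
  have big: "2 * c \<le> real k \<Longrightarrow> real k \<le> 2 * c * phi (1/c) k"
  proof -
    assume h: "2 * c \<le> real k"
    have "real k * (1/c) - 1 \<le> phi (1/c) k" by (rule phi_lower1[OF t])
    moreover have "real k * (1/c) \<ge> 2" using h c by (simp add: field_simps)
    ultimately have "real k * (1/c) / 2 \<le> phi (1/c) k" by (rule half_le_aux)
    then show ?thesis using c by (simp add: field_simps)
  qed
  have Rc: "2 * c \<le> R * c" using R c by (intro mult_right_mono) auto
  show "R * c \<le> real k \<Longrightarrow> real k \<le> 2 * c * phi (1/c) k"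
    using big Rc by linarith
  show "R * c \<le> real k \<Longrightarrow> 1 \<le> (2 / R) * phi (1/c) k"
  proof -
    assume h: "R * c \<le> real k"
    have "2 * c \<le> real k" using h Rc by linarith
    then have "real k \<le> 2 * c * phi (1/c) k" by (rule big)
    with h have "R * c \<le> 2 * c * phi (1/c) k" by linarith
    then have "R \<le> 2 * phi (1/c) k" using c by (simp add: mult.commute mult.left_commute)
    then show ?thesis using R by (simp add: field_simps)
  qed
  show "real k < R * c \<Longrightarrow> real k * (real k - 1) \<le> (2 * exp 4 + 2 * R) * c\<^sup>2 * phi (1/c) k"
  proof -
    assume h: "real k < R * c"
    have ph: "0 \<le> phi (1/c) k" by (rule phi_nonneg[OF t])
    have kk: "0 \<le> real k * (real k - 1)" by (cases k) auto
    show ?thesis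
    proof (cases "real k \<le> 2 * c")
      case True
      have e: "exp (-4) \<le> (1 - 1/c) ^ k" by (rule pow_lower_exp[OF c True])
      have "(1/c)^2 * exp (-4) * (real k * (real k - 1)) / 2 \<le> (1/c)^2 * (1 - 1/c) ^ k * (real k * (real k - 1)) / 2"
        using e kk by (intro divide_right_mono mult_right_mono mult_left_mono) auto
      also have "\<dots> \<le> phi (1/c) k" by (rule phi_lower2[OF t])
      finally have "(1/c)^2 * exp (-4) * (real k * (real k - 1)) / 2 \<le> phi (1/c) k" .
      then have "real k * (real k - 1) \<le> 2 * exp 4 * c\<^sup>2 * phi (1/c) k"
        using c by (simp add: field_simps exp_minus power2_eq_square)
      also have "\<dots> \<le> (2 * exp 4 + 2 * R) * c\<^sup>2 * phi (1/c) k"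
        using ph R by (intro mult_right_mono) auto
      finally show ?thesis .
    next
      case False
      then have "real k \<le> 2 * c * phi (1/c) k" using big by simp
      have "real k * (real k - 1) \<le> real k * real k" by (intro mult_left_mono) auto
      also have "\<dots> \<le> (R * c) * (2 * c * phi (1/c) k)"
        using h \<open>real k \<le> 2 * c * phi (1/c) k\<close> by (intro mult_mono) auto
      also have "\<dots> = 2 * R * c\<^sup>2 * phi (1/c) k" by (simp add: power2_eq_square)
      also have "\<dots> \<le> (2 * exp 4 + 2 * R) * c\<^sup>2 * phi (1/c) k"
        using ph c by (intro mult_right_mono) auto
      finally show ?thesis .
    qed
  qed
qed

lemma bpi_cong:
  assumes "\<And>i j. 1 \<le> i \<Longrightarrow> i \<le> k \<Longrightarrow> 1 \<le> j \<Longrightarrow> X i j x = X' i j x'"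
    and "\<And>i. 1 \<le> i \<Longrightarrow> i \<le> k \<Longrightarrow> E i x = E' i x'"
  shows "bpi X E k x = bpi X' E' k x'"
  using assms
proof (induction k)
  case 0 then show ?case by simp
next
  case (Suc k)
  have ih: "bpi X E k x = bpi X' E' k x'" using Suc.prems by (intro Suc.IH) auto
  show ?case using Suc.prems by (simp add: ih)
qed

lemma measurable_sum_nat_range:
  fixes N :: nat
  assumes "\<And>j. f j \<in> M \<rightarrow>\<^sub>M count_space (UNIV::nat set)"
  shows "(\<lambda>x. \<Sum>j\<in>{1..N}. f j x) \<in> M \<rightarrow>\<^sub>M count_space UNIV"
proof (induction N)
  case 0 then show ?case by simp
next
  case (Suc N)
  have "(\<lambda>x. (\<Sum>j\<in>{1..N}. f j x) + f (Suc N) x) \<in> M \<rightarrow>\<^sub>M count_space UNIV"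
    using Suc assms[of "Suc N"] by measurable
  then show ?case by (simp add: add.commute)
qed

lemma bpi_measurable:
  assumes "\<And>i j. 1 \<le> i \<Longrightarrow> i \<le> k \<Longrightarrow> 1 \<le> j \<Longrightarrow> X i j \<in> M \<rightarrow>\<^sub>M count_space UNIV"
    and "\<And>i. 1 \<le> i \<Longrightarrow> i \<le> k \<Longrightarrow> E i \<in> M \<rightarrow>\<^sub>M count_space UNIV"
  shows "bpi X E k \<in> M \<rightarrow>\<^sub>M count_space UNIV"
  using assms
proof (induction k)
  case 0 then show ?case by simp
next
  case (Suc k)
  have ih: "bpi X E k \<in> M \<rightarrow>\<^sub>M count_space UNIV" using Suc.prems by (intro Suc.IH) auto
  let ?X' = "\<lambda>j. if 1 \<le> j then X (Suc k) j else (\<lambda>x. 0)"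
  have m1: "\<And>j. ?X' j \<in> M \<rightarrow>\<^sub>M count_space UNIV" using Suc.prems by auto
  have "\<And>N. (\<lambda>x. \<Sum>j\<in>{1..N}. ?X' j x) \<in> M \<rightarrow>\<^sub>M count_space UNIV"
    by (rule measurable_sum_nat_range[OF m1])
  then have "(\<lambda>x. \<Sum>j\<in>{1..bpi X E k x}. ?X' j x) \<in> M \<rightarrow>\<^sub>M count_space UNIV"
    by (rule measurable_compose_countable[OF _ ih])
  moreover have "(\<lambda>x. \<Sum>j\<in>{1..bpi X E k x}. ?X' j x) = (\<lambda>x. \<Sum>j\<in>{1..bpi X E k x}. X (Suc k) j x)"
    by (intro ext sum.cong) auto
  ultimately have s: "(\<lambda>x. \<Sum>j\<in>{1..bpi X E k x}. X (Suc k) j x) \<in> M \<rightarrow>\<^sub>M count_space UNIV" by simp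
  have e: "E (Suc k) \<in> M \<rightarrow>\<^sub>M count_space UNIV" using Suc.prems by auto
  have "(\<lambda>x. (\<Sum>j\<in>{1..bpi X E k x}. X (Suc k) j x) + E (Suc k) x) \<in> M \<rightarrow>\<^sub>M count_space UNIV"
    using s e by measurable
  then show ?case by simp
qed

lemma local_indep:
  fixes M :: "'a measure" and xi :: "nat \<Rightarrow> nat \<Rightarrow> 'a \<Rightarrow> nat" and eta :: "nat \<Rightarrow> 'a \<Rightarrow> nat"
  assumes ps: "prob_space M"
    and indep: "prob_space.indep_vars M (\<lambda>_. count_space UNIV)
        (\<lambda>i. case i of Inl (k, j) \<Rightarrow> xi k j | Inr k \<Rightarrow> eta k)
        ({(k, j). 1 \<le> k \<and> 1 \<le> j} <+> {k. 1 \<le> k})"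
    and k: "1 \<le> k"
  shows "prob_space.indep_vars M (\<lambda>_. count_space UNIV)
     (\<lambda>i. case i of None \<Rightarrow> bpi xi eta (k - 1) | Some j \<Rightarrow> xi k (Suc j)) UNIV"
proof -
  interpret prob_space M by fact
  define V where "V = (\<lambda>i. case i of Inl (k, j) \<Rightarrow> xi k j | Inr k \<Rightarrow> eta k)"
  define I where "I = ({(k::nat, j). 1 \<le> k \<and> 1 \<le> (j::nat)} <+> {k::nat. 1 \<le> k})"
  define P where "P = Inl ` {(i::nat, j::nat). 1 \<le> i \<and> i < k \<and> 1 \<le> j} \<union> Inr ` {i. 1 \<le> i \<and> i < k}"
  define Kf where "Kf = (\<lambda>ww. case ww of None \<Rightarrow> P | Some j \<Rightarrow> {Inl (k, Suc j)})"
  have iv: "indep_vars (\<lambda>_. count_space UNIV) V I" using indep by (simp add: V_def I_def)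
  have r: "indep_vars (\<lambda>j. PiM (Kf j) (\<lambda>_. count_space UNIV)) (\<lambda>j \<omega>. restrict (\<lambda>i. V i \<omega>) (Kf j)) UNIV"
  proof (rule indep_vars_restrict[OF iv])
    fix j :: "nat option" show "Kf j \<subseteq> I"
      using k by (cases j) (auto simp: Kf_def P_def I_def)
  next
    show "disjoint_family_on Kf UNIV"
      unfolding disjoint_family_on_def Kf_def P_def
      by (auto split: option.splits)
  qed
  define Yf where "Yf = (\<lambda>ww::nat option. case ww of
      None \<Rightarrow> (\<lambda>r. bpi (\<lambda>i j r. r (Inl (i, j))) (\<lambda>i r. r (Inr i)) (k - 1) r)
    | Some j \<Rightarrow> (\<lambda>r. r (Inl (k, Suc j))))"
  have ym: "Yf ww \<in> PiM (Kf ww) (\<lambda>_. count_space UNIV) \<rightarrow>\<^sub>M count_space UNIV" for ww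
  proof (cases ww)
    case None
    have "bpi (\<lambda>i j r. r (Inl (i, j))) (\<lambda>i r. r (Inr i)) (k - 1) \<in> PiM P (\<lambda>_. count_space UNIV) \<rightarrow>\<^sub>M count_space UNIV"
    proof (rule bpi_measurable)
      fix i j :: nat assume "1 \<le> i" "i \<le> k - 1" "1 \<le> j"
      then have "Inl (i, j) \<in> P" using k unfolding P_def by auto
      then show "(\<lambda>r. r (Inl (i, j))) \<in> PiM P (\<lambda>_. count_space UNIV) \<rightarrow>\<^sub>M count_space UNIV"
        by (rule measurable_component_singleton)
    next
      fix i :: nat assume "1 \<le> i" "i \<le> k - 1"
      then have "Inr i \<in> P" using k unfolding P_def by auto
      then show "(\<lambda>r. r (Inr i)) \<in> PiM P (\<lambda>_. count_space UNIV) \<rightarrow>\<^sub>M count_space UNIV"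
        by (rule measurable_component_singleton)
    qed
    then show ?thesis using None by (simp add: Yf_def Kf_def)
  next
    case (Some j)
    then show ?thesis by (simp add: Yf_def Kf_def measurable_component_singleton)
  qed
  have c: "indep_vars (\<lambda>_. count_space UNIV) (\<lambda>ww x. Yf ww (restrict (\<lambda>i. V i x) (Kf ww))) UNIV"
    by (rule indep_vars_compose2[OF r ym])
  show ?thesis
  proof (rule indep_vars_cong[THEN iffD1, OF _ _ _ c])
    fix ww :: "nat option"
    show "(\<lambda>x. Yf ww (restrict (\<lambda>i. V i x) (Kf ww))) =
      (case ww of None \<Rightarrow> bpi xi eta (k - 1) | Some j \<Rightarrow> xi k (Suc j))"
    proof (cases ww)
      case None
      have "Yf None (restrict (\<lambda>i. V i x) (Kf None)) = bpi xi eta (k - 1) x" for x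
        unfolding Yf_def Kf_def option.case
      proof (rule bpi_cong)
        fix i j assume "1 \<le> i" "i \<le> k - 1" "1 \<le> (j::nat)"
        then have "Inl (i, j) \<in> P" using k unfolding P_def by auto
        then show "restrict (\<lambda>i. V i x) P (Inl (i, j)) = xi i j x" by (simp add: V_def)
      next
        fix i assume "1 \<le> i" "i \<le> k - 1"
        then have "Inr i \<in> P" using k unfolding P_def by auto
        then show "restrict (\<lambda>i. V i x) P (Inr i) = eta i x" by (simp add: V_def)
      qed
      then show ?thesis using None by auto
    next
      case (Some j)
      then show ?thesis by (simp add: Yf_def Kf_def V_def)
    qed
  qed auto
qed

locale wald = prob_space M for M :: "'a measure" +
  fixes Y :: "'a \<Rightarrow> nat" and Z :: "nat \<Rightarrow> 'a \<Rightarrow> nat" and p :: "nat pmf"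
  assumes ind: "indep_vars (\<lambda>_. count_space UNIV) (\<lambda>i. case i of None \<Rightarrow> Y | Some j \<Rightarrow> Z j) UNIV"
    and dZ: "\<And>j. distr M (count_space UNIV) (Z j) = measure_pmf p"
begin

lemma Y_meas[measurable]: "Y \<in> M \<rightarrow>\<^sub>M count_space UNIV"
  using ind unfolding indep_vars_def by (metis UNIV_I option.simps(4))

lemma Z_meas[measurable]: "Z j \<in> M \<rightarrow>\<^sub>M count_space UNIV"
  using ind unfolding indep_vars_def by (metis UNIV_I option.simps(5))

lemma ind_real:
  fixes h g :: "nat \<Rightarrow> 'b::topological_space"
  shows "indep_vars (\<lambda>_. borel) (\<lambda>i. case i of None \<Rightarrow> (\<lambda>x. h (Y x)) | Some j \<Rightarrow> (\<lambda>x. g (Z j x))) UNIV"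
proof -
  define Yf where "Yf = (\<lambda>i::nat option. case i of None \<Rightarrow> h | Some j \<Rightarrow> g)"
  have "indep_vars (\<lambda>_. borel) (\<lambda>i x. Yf i ((case i of None \<Rightarrow> Y | Some j \<Rightarrow> Z j) x)) UNIV"
    by (rule indep_vars_compose2[OF ind]) auto
  then show ?thesis
    by (rule indep_vars_cong[THEN iffD1, rotated 3]) (auto simp: Yf_def split: option.splits)
qed

lemma int_Z: "integral\<^sup>L M (\<lambda>x. g (Z j x)) = measure_pmf.expectation p (g :: nat \<Rightarrow> real)"
proof -
  have "measure_pmf.expectation p g = integral\<^sup>L (distr M (count_space UNIV) (Z j)) g"
    by (simp add: dZ)
  also have "\<dots> = integral\<^sup>L M (\<lambda>x. g (Z j x))"
    by (rule integral_distr) auto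
  finally show ?thesis by simp
qed

lemma nn_Z: "(\<integral>\<^sup>+x. f (Z j x) \<partial>M) = (\<integral>\<^sup>+z. f z \<partial>measure_pmf p)"
proof -
  have "(\<integral>\<^sup>+z. f z \<partial>measure_pmf p) = (\<integral>\<^sup>+z. f z \<partial>distr M (count_space UNIV) (Z j))"
    by (simp add: dZ)
  also have "\<dots> = (\<integral>\<^sup>+x. f (Z j x) \<partial>M)"
    by (rule nn_integral_distr) auto
  finally show ?thesis by simp
qed

lemma nn_prod2:
  fixes h f :: "nat \<Rightarrow> real" assumes "\<And>y. 0 \<le> h y" "\<And>z. 0 \<le> f z"
  shows "(\<integral>\<^sup>+x. ennreal (h (Y x) * f (Z j x)) \<partial>M) =
     (\<integral>\<^sup>+x. ennreal (h (Y x)) \<partial>M) * (\<integral>\<^sup>+z. ennreal (f z) \<partial>measure_pmf p)"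
proof -
  let ?H = "\<lambda>i. case i of None \<Rightarrow> (\<lambda>x. ennreal (h (Y x))) | Some j \<Rightarrow> (\<lambda>x. ennreal (f (Z j x)))"
  have iv: "indep_vars (\<lambda>_. borel) ?H {None, Some j}"
    by (rule indep_vars_subset[OF ind_real]) auto
  have "(\<integral>\<^sup>+x. (\<Prod>i\<in>{None, Some j}. ?H i x) \<partial>M) = (\<Prod>i\<in>{None, Some j}. \<integral>\<^sup>+x. ?H i x \<partial>M)"
    by (rule indep_vars_nn_integral[OF _ iv]) (auto split: option.splits)
  then show ?thesis using nn_Z[of "\<lambda>z. ennreal (f z)" j] by (simp add: ennreal_mult assms)
qed

lemma int_prod2:
  fixes h g :: "nat \<Rightarrow> real" assumes "\<And>y. \<bar>h y\<bar> \<le> Bh" "\<And>z. \<bar>g z\<bar> \<le> Bg"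
  shows "integral\<^sup>L M (\<lambda>x. h (Y x) * g (Z j x)) =
     integral\<^sup>L M (\<lambda>x. h (Y x)) * measure_pmf.expectation p g"
proof -
  let ?H = "\<lambda>i. case i of None \<Rightarrow> (\<lambda>x. h (Y x)) | Some j \<Rightarrow> (\<lambda>x. g (Z j x))"
  have iv: "indep_vars (\<lambda>_. borel) ?H {None, Some j}"
    by (rule indep_vars_subset[OF ind_real]) auto
  have b1: "\<bar>h y\<bar> \<le> max Bh Bg" for y by (metis assms(1) max.coboundedI1)
  have b2: "\<bar>g y\<bar> \<le> max Bh Bg" for y by (metis assms(2) max.coboundedI2)
  have intg: "integrable M (?H i)" for i
    by (cases i) (auto intro!: integrable_const_bound[where B="max Bh Bg"] AE_I2 simp: b1 b2)
  have "integral\<^sup>L M (\<lambda>x. \<Prod>i\<in>{None, Some j}. ?H i x) = (\<Prod>i\<in>{None, Some j}. integral\<^sup>L M (?H i))"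
    by (rule indep_vars_lebesgue_integral[OF _ iv]) (auto simp: intg)
  then show ?thesis by (simp add: int_Z)
qed

lemma int_prod3:
  fixes h g :: "nat \<Rightarrow> real" assumes "\<And>y. \<bar>h y\<bar> \<le> Bh" "\<And>z. \<bar>g z\<bar> \<le> Bg" and ij: "i \<noteq> j"
  shows "integral\<^sup>L M (\<lambda>x. h (Y x) * g (Z i x) * g (Z j x)) =
     integral\<^sup>L M (\<lambda>x. h (Y x)) * measure_pmf.expectation p g * measure_pmf.expectation p g"
proof -
  let ?H = "\<lambda>i. case i of None \<Rightarrow> (\<lambda>x. h (Y x)) | Some j \<Rightarrow> (\<lambda>x. g (Z j x))"
  have iv: "indep_vars (\<lambda>_. borel) ?H {None, Some i, Some j}"
    by (rule indep_vars_subset[OF ind_real]) auto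
  have b1: "\<bar>h y\<bar> \<le> max Bh Bg" for y by (metis assms(1) max.coboundedI1)
  have b2: "\<bar>g y\<bar> \<le> max Bh Bg" for y by (metis assms(2) max.coboundedI2)
  have intg: "integrable M (?H l)" for l
    by (cases l) (auto intro!: integrable_const_bound[where B="max Bh Bg"] AE_I2 simp: b1 b2)
  have "integral\<^sup>L M (\<lambda>x. \<Prod>l\<in>{None, Some i, Some j}. ?H l x) = (\<Prod>l\<in>{None, Some i, Some j}. integral\<^sup>L M (?H l))"
    by (rule indep_vars_lebesgue_integral[OF _ iv]) (auto simp: intg)
  then show ?thesis using ij by (simp add: int_Z mult.assoc)
qed


lemma ev_meas[measurable]: "{x\<in>space M. j < Y x} \<in> sets M"
  by measurable

lemma nn_ind: "(\<integral>\<^sup>+x. ennreal (if j < Y x then 1 else 0) \<partial>M) = emeasure M {x\<in>space M. j < Y x}"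
proof -
  have "(\<integral>\<^sup>+x. ennreal (if j < Y x then 1 else 0) \<partial>M) = (\<integral>\<^sup>+x. indicator {x\<in>space M. j < Y x} x \<partial>M)"
    by (intro nn_integral_cong) (auto simp: indicator_def)
  also have "\<dots> = emeasure M {x\<in>space M. j < Y x}" by (rule nn_integral_indicator) measurable
  finally show ?thesis .
qed

lemma int_ind: "integral\<^sup>L M (\<lambda>x. if j < Y x then 1 else 0 :: real) = measure M {x\<in>space M. j < Y x}"
proof -
  have "integral\<^sup>L M (\<lambda>x. if j < Y x then 1 else 0 :: real) = integral\<^sup>L M (indicator {x\<in>space M. j < Y x})"
    by (intro Bochner_Integration.integral_cong) (auto simp: indicator_def)
  also have "\<dots> = measure M {x\<in>space M. j < Y x}"
    by (simp add: emeasure_eq_measure)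
  finally show ?thesis .
qed

lemma wald0:
  fixes f :: "nat \<Rightarrow> real" assumes f0: "\<And>z. 0 \<le> f z"
  shows "(\<integral>\<^sup>+x. ennreal (\<Sum>j<Y x. f (Z j x)) \<partial>M) =
     (\<Sum>j. emeasure M {x\<in>space M. j < Y x}) * (\<integral>\<^sup>+z. ennreal (f z) \<partial>measure_pmf p)"
proof -
  have pt: "ennreal (\<Sum>j<Y x. f (Z j x)) = (\<Sum>j. ennreal ((if j < Y x then 1 else 0) * f (Z j x)))" for x
  proof -
    have "(\<Sum>j. ennreal ((if j < Y x then 1 else 0) * f (Z j x))) = (\<Sum>j<Y x. ennreal ((if j < Y x then 1 else 0) * f (Z j x)))"
      by (rule suminf_finite) auto
    also have "\<dots> = (\<Sum>j<Y x. ennreal (f (Z j x)))" by (intro sum.cong) auto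
    also have "\<dots> = ennreal (\<Sum>j<Y x. f (Z j x))" by (rule sum_ennreal) (simp add: f0)
    finally show ?thesis by simp
  qed
  have "(\<integral>\<^sup>+x. ennreal (\<Sum>j<Y x. f (Z j x)) \<partial>M) = (\<integral>\<^sup>+x. (\<Sum>j. ennreal ((if j < Y x then 1 else 0) * f (Z j x))) \<partial>M)"
    by (simp add: pt)
  also have "\<dots> = (\<Sum>j. \<integral>\<^sup>+x. ennreal ((if j < Y x then 1 else 0) * f (Z j x)) \<partial>M)"
    by (rule nn_integral_suminf) measurable
  also have "\<dots> = (\<Sum>j. emeasure M {x\<in>space M. j < Y x} * (\<integral>\<^sup>+z. ennreal (f z) \<partial>measure_pmf p))"
  proof (rule suminf_cong)
    fix j
    have "(\<integral>\<^sup>+x. ennreal ((if j < Y x then 1 else 0) * f (Z j x)) \<partial>M)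
       = (\<integral>\<^sup>+x. ennreal (if j < Y x then 1 else 0) \<partial>M) * (\<integral>\<^sup>+z. ennreal (f z) \<partial>measure_pmf p)"
      by (rule nn_prod2[where h="\<lambda>y. if j < y then 1 else 0"]) (auto simp: f0)
    then show "(\<integral>\<^sup>+x. ennreal ((if j < Y x then 1 else 0) * f (Z j x)) \<partial>M) = emeasure M {x\<in>space M. j < Y x} * (\<integral>\<^sup>+z. ennreal (f z) \<partial>measure_pmf p)"
      by (simp add: nn_ind)
  qed
  also have "\<dots> = (\<Sum>j. emeasure M {x\<in>space M. j < Y x}) * (\<integral>\<^sup>+z. ennreal (f z) \<partial>measure_pmf p)"
    by (rule ennreal_suminf_multc)
  finally show ?thesis .
qed

lemma nn_Y: "(\<integral>\<^sup>+x. ennreal (real (Y x)) \<partial>M) = (\<Sum>j. emeasure M {x\<in>space M. j < Y x})"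
  using wald0[of "\<lambda>_. 1"] by (simp add: measure_pmf.emeasure_space_1)

lemma wald:
  fixes f :: "nat \<Rightarrow> real" assumes f0: "\<And>z. 0 \<le> f z"
  shows "(\<integral>\<^sup>+x. ennreal (\<Sum>j<Y x. f (Z j x)) \<partial>M) =
     (\<integral>\<^sup>+x. ennreal (real (Y x)) \<partial>M) * (\<integral>\<^sup>+z. ennreal (f z) \<partial>measure_pmf p)"
  using wald0[OF f0] nn_Y by simp

lemma second_moment:
  fixes g :: "nat \<Rightarrow> real" assumes gb: "\<And>z. \<bar>g z\<bar> \<le> Bg" and g0: "measure_pmf.expectation p g = 0"
  shows "integral\<^sup>L M (\<lambda>x. (\<Sum>j<B. (if j < Y x then 1 else 0) * g (Z j x))\<^sup>2) =
     (\<Sum>j<B. measure M {x\<in>space M. j < Y x}) * measure_pmf.expectation p (\<lambda>z. (g z)\<^sup>2)"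
proof -
  define a where "a = (\<lambda>j x. (if j < Y x then 1 else 0) * g (Z j x))"
  have Bg0: "0 \<le> Bg" using gb[of 0] by simp
  have ab: "\<bar>a i x * a j x\<bar> \<le> Bg * Bg" for i j x
    unfolding a_def abs_mult by (intro mult_mono) (auto simp: gb Bg0)
  have aint: "integrable M (\<lambda>x. a i x * a j x)" for i j
    by (rule integrable_const_bound[where B="Bg * Bg"]) (auto intro!: AE_I2 simp: ab simp del: abs_mult, auto simp: a_def)
  have sq: "(\<Sum>j<B. a j x)\<^sup>2 = (\<Sum>i<B. \<Sum>j<B. a i x * a j x)" for x
    by (simp add: power2_eq_square sum_product)
  have diag: "integral\<^sup>L M (\<lambda>x. a i x * a j x) = (if i = j then measure M {x\<in>space M. j < Y x} * measure_pmf.expectation p (\<lambda>z. (g z)\<^sup>2) else 0)" for i j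
  proof (cases "i = j")
    case True
    have "integral\<^sup>L M (\<lambda>x. a i x * a j x) = integral\<^sup>L M (\<lambda>x. (if j < Y x then 1 else 0) * (g (Z j x))\<^sup>2)"
      using True by (intro Bochner_Integration.integral_cong) (auto simp: a_def power2_eq_square)
    also have "\<dots> = integral\<^sup>L M (\<lambda>x. if j < Y x then 1 else 0 :: real) * measure_pmf.expectation p (\<lambda>z. (g z)\<^sup>2)"
    proof (rule int_prod2[where Bh=1 and Bg="Bg*Bg"])
      fix z show "\<bar>(g z)\<^sup>2\<bar> \<le> Bg * Bg"
        unfolding power2_eq_square abs_mult by (intro mult_mono) (auto simp: gb Bg0)
    qed auto
    finally show ?thesis using True by (simp add: int_ind)
  next
    case False
    have "integral\<^sup>L M (\<lambda>x. a i x * a j x) = integral\<^sup>L M (\<lambda>x. (if max i j < Y x then 1 else 0) * g (Z i x) * g (Z j x))"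
      by (intro Bochner_Integration.integral_cong) (auto simp: a_def)
    also have "\<dots> = integral\<^sup>L M (\<lambda>x. if max i j < Y x then 1 else 0 :: real) * measure_pmf.expectation p g * measure_pmf.expectation p g"
      by (rule int_prod3[where Bh=1 and Bg=Bg]) (auto simp: gb False)
    finally show ?thesis using False g0 by simp
  qed
  have "integral\<^sup>L M (\<lambda>x. (\<Sum>j<B. a j x)\<^sup>2) = (\<Sum>i<B. \<Sum>j<B. integral\<^sup>L M (\<lambda>x. a i x * a j x))"
    by (simp add: sq Bochner_Integration.integral_sum aint)
  also have "\<dots> = (\<Sum>i<B. measure M {x\<in>space M. i < Y x} * measure_pmf.expectation p (\<lambda>z. (g z)\<^sup>2))"
    by (simp add: diag)
  finally show ?thesis by (simp add: a_def sum_distrib_right)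
qed

end

definition trunc :: "real \<Rightarrow> nat \<Rightarrow> real" where
  "trunc T k = (if real k < T then real k else 0)"
definition tailp :: "nat pmf \<Rightarrow> real \<Rightarrow> real" where
  "tailp p T = measure_pmf.prob p {k. T \<le> real k}"
definition tmean :: "nat pmf \<Rightarrow> real \<Rightarrow> real" where
  "tmean p T = measure_pmf.expectation p (trunc T)"
definition tvar :: "nat pmf \<Rightarrow> real \<Rightarrow> real" where
  "tvar p T = measure_pmf.expectation p (\<lambda>k. (trunc T k - tmean p T)\<^sup>2)"

lemma trunc_nonneg: "0 \<le> trunc T k" by (simp add: trunc_def)
lemma trunc_le: "0 < T \<Longrightarrow> trunc T k \<le> T" by (simp add: trunc_def)

lemma int_bounded_pmf:
  fixes f :: "nat \<Rightarrow> real" assumes "\<And>k. \<bar>f k\<bar> \<le> B"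
  shows "integrable (measure_pmf p) f"
  by (rule measure_pmf.integrable_const_bound[where B=B]) (auto simp: assms)

lemma tmean_bounds: "0 < T \<Longrightarrow> 0 \<le> tmean p T \<and> tmean p T \<le> T"
proof -
  assume Tp: "0 < T"
  have i: "integrable (measure_pmf p) (trunc T)"
    by (rule int_bounded_pmf[where B=T]) (use Tp in \<open>auto simp: trunc_def\<close>)
  have "0 \<le> tmean p T" unfolding tmean_def by (rule integral_nonneg_AE) (auto simp: trunc_nonneg)
  moreover have "tmean p T \<le> measure_pmf.expectation p (\<lambda>_. T)"
    unfolding tmean_def
  proof (rule integral_mono[OF i])
    fix k show "trunc T k \<le> T" using trunc_le[OF \<open>0 < T\<close>] .
  qed auto
  ultimately show ?thesis by simp
qed

context
  fixes p :: "nat pmf" and c R :: real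
  assumes ip: "integrable (measure_pmf p) real" and c: "2 \<le> c" and R: "2 \<le> R"
begin

lemma phi_int: "integrable (measure_pmf p) (phi (1/c))"
proof -
  have a: "integrable (measure_pmf p) (\<lambda>k. (1 - 1/c) ^ k - 1)"
  proof (rule int_bounded_pmf[where B=2])
    fix k
    have "0 \<le> (1 - 1/c) ^ k" "(1 - 1/c) ^ k \<le> 1" using c by (auto simp: power_le_one)
    then show "\<bar>(1 - 1/c) ^ k - 1\<bar> \<le> 2" by linarith
  qed
  have b: "integrable (measure_pmf p) (\<lambda>k. real k * (1/c))" using ip by simp
  show ?thesis unfolding phi_def[abs_def] using Bochner_Integration.integrable_add[OF a b] by simp
qed

lemma phi_expect: "measure_pmf.expectation p (phi (1/c)) = pgf p (1 - 1/c) - 1 + pmean p / c"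
proof -
  have a: "integrable (measure_pmf p) (\<lambda>k. (1 - 1/c) ^ k)"
    by (rule int_bounded_pmf[where B=1]) (use c in \<open>auto simp: power_le_one\<close>)
  have "measure_pmf.expectation p (phi (1/c)) = measure_pmf.expectation p (\<lambda>k. ((1 - 1/c) ^ k - 1) + real k * (1/c))"
    unfolding phi_def by simp
  also have "\<dots> = measure_pmf.expectation p (\<lambda>k. (1 - 1/c) ^ k - 1) + measure_pmf.expectation p (\<lambda>k. real k * (1/c))"
    by (rule Bochner_Integration.integral_add) (use a ip in auto)
  also have "\<dots> = pgf p (1 - 1/c) - 1 + pmean p / c"
    using a by (simp add: pgf_def pmean_def Bochner_Integration.integral_diff)
  finally show ?thesis .
qed

lemma phi_exp_nonneg: "0 \<le> measure_pmf.expectation p (phi (1/c))"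
  by (rule integral_nonneg_AE) (use c in \<open>auto intro!: phi_nonneg\<close>)

lemma tail_bound: "tailp p (R * c) \<le> (2 / R) * measure_pmf.expectation p (phi (1/c))"
proof -
  have "tailp p (R * c) = measure_pmf.expectation p (indicator {k. R * c \<le> real k})"
    unfolding tailp_def by simp
  also have "\<dots> \<le> measure_pmf.expectation p (\<lambda>k. (2 / R) * phi (1/c) k)"
  proof (rule integral_mono)
    show "integrable (measure_pmf p) (indicat_real {k. R * c \<le> real k})"
      by (rule int_bounded_pmf[where B=1]) auto
    show "integrable (measure_pmf p) (\<lambda>k. 2 / R * phi (1 / c) k)" using phi_int by simp
    fix k show "indicat_real {k. R * c \<le> real k} k \<le> 2 / R * phi (1 / c) k"
      using phi_bounds(2)[OF c R, of k] phi_nonneg[of "1/c" k] c R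
      by (auto simp: indicator_def)
  qed
  finally show ?thesis by simp
qed

lemma mean_shift: "0 \<le> pmean p - tmean p (R * c) \<and> pmean p - tmean p (R * c) \<le> 2 * c * measure_pmf.expectation p (phi (1/c))"
proof -
  have it: "integrable (measure_pmf p) (trunc (R * c))"
    by (rule int_bounded_pmf[where B="R*c"]) (use c R in \<open>auto simp: trunc_def\<close>)
  have eq: "pmean p - tmean p (R * c) = measure_pmf.expectation p (\<lambda>k. real k - trunc (R * c) k)"
    unfolding pmean_def tmean_def using it ip by (simp add: Bochner_Integration.integral_diff)
  have i2: "integrable (measure_pmf p) (\<lambda>k. real k - trunc (R * c) k)" using it ip by simp
  have "0 \<le> measure_pmf.expectation p (\<lambda>k. real k - trunc (R * c) k)"
    by (rule integral_nonneg_AE) (auto simp: trunc_def)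
  moreover have "measure_pmf.expectation p (\<lambda>k. real k - trunc (R * c) k) \<le> measure_pmf.expectation p (\<lambda>k. 2 * c * phi (1/c) k)"
  proof (rule integral_mono[OF i2])
    show "integrable (measure_pmf p) (\<lambda>k. 2 * c * phi (1 / c) k)" using phi_int by simp
    fix k show "real k - trunc (R * c) k \<le> 2 * c * phi (1 / c) k"
      using phi_bounds(1)[OF c R, of k] phi_nonneg[of "1/c" k] c
      by (auto simp: trunc_def)
  qed
  ultimately show ?thesis using eq by simp
qed

lemma var_bound: "tvar p (R * c) \<le> (2 * exp 4 + 2 * R) * c\<^sup>2 * measure_pmf.expectation p (phi (1/c))
     + tmean p (R * c) * (1 - tmean p (R * c))"
proof -
  let ?T = "R * c" and ?m = "tmean p (R * c)"
  have T: "0 < ?T" using c R by simp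
  have b: "\<bar>trunc ?T k\<bar> \<le> ?T" for k using trunc_le[OF T] trunc_nonneg by simp
  have it: "integrable (measure_pmf p) (trunc ?T)" by (rule int_bounded_pmf[OF b])
  have it2: "integrable (measure_pmf p) (\<lambda>k. trunc ?T k * (trunc ?T k - 1))"
    by (rule int_bounded_pmf[where B="?T * (?T + 1)"])
       (use b T in \<open>auto simp: abs_mult intro!: mult_mono order.trans[OF abs_triangle_ineq4]\<close>)
  have "tvar p ?T = measure_pmf.expectation p (\<lambda>k. trunc ?T k * (trunc ?T k - 1) + trunc ?T k * (1 - 2 * ?m) + ?m\<^sup>2)"
    unfolding tvar_def by (intro Bochner_Integration.integral_cong) (auto simp: power2_eq_square algebra_simps)
  also have "\<dots> = measure_pmf.expectation p (\<lambda>k. trunc ?T k * (trunc ?T k - 1)) + ?m * (1 - 2 * ?m) + ?m\<^sup>2"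
    using it it2 by (simp add: Bochner_Integration.integral_add tmean_def)
  also have "\<dots> = measure_pmf.expectation p (\<lambda>k. trunc ?T k * (trunc ?T k - 1)) + ?m * (1 - ?m)"
    by (simp add: algebra_simps power2_eq_square)
  also have "measure_pmf.expectation p (\<lambda>k. trunc ?T k * (trunc ?T k - 1)) \<le> measure_pmf.expectation p (\<lambda>k. (2 * exp 4 + 2 * R) * c\<^sup>2 * phi (1/c) k)"
  proof (rule integral_mono[OF it2])
    show "integrable (measure_pmf p) (\<lambda>k. (2 * exp 4 + 2 * R) * c\<^sup>2 * phi (1 / c) k)" using phi_int by simp
    fix k
    have pn: "0 \<le> (2 * exp 4 + 2 * R) * c\<^sup>2 * phi (1 / c) k"
      using phi_nonneg[of "1/c" k] c R by simp
    show "trunc ?T k * (trunc ?T k - 1) \<le> (2 * exp 4 + 2 * R) * c\<^sup>2 * phi (1 / c) k"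
      using phi_bounds(3)[OF c R, of k] pn by (auto simp: trunc_def)
  qed
  finally show ?thesis by simp
qed

end

locale bp = prob_space M for M :: "'a measure" +
  fixes X :: "nat \<Rightarrow> nat \<Rightarrow> 'a \<Rightarrow> nat" and E :: "nat \<Rightarrow> 'a \<Rightarrow> nat" and p q :: "nat pmf"
  assumes indep: "indep_vars (\<lambda>_. count_space UNIV)
        (\<lambda>i. case i of Inl (k, j) \<Rightarrow> X k j | Inr k \<Rightarrow> E k)
        ({(k, j). 1 \<le> k \<and> 1 \<le> j} <+> {k. 1 \<le> k})"
    and dX: "\<And>k j. 1 \<le> k \<Longrightarrow> 1 \<le> j \<Longrightarrow> distr M (count_space UNIV) (X k j) = measure_pmf p"
    and dE: "\<And>k. 1 \<le> k \<Longrightarrow> distr M (count_space UNIV) (E k) = measure_pmf q"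
    and ip: "integrable (measure_pmf p) real"
    and iq: "integrable (measure_pmf q) real"
begin

lemma X_meas: "1 \<le> k \<Longrightarrow> 1 \<le> j \<Longrightarrow> X k j \<in> M \<rightarrow>\<^sub>M count_space UNIV"
  using indep unfolding indep_vars_def by (drule_tac conjunct1, drule_tac x="Inl (k, j)" in bspec) auto

lemma E_meas: "1 \<le> k \<Longrightarrow> E k \<in> M \<rightarrow>\<^sub>M count_space UNIV"
  using indep unfolding indep_vars_def by (drule_tac conjunct1, drule_tac x="Inr k" in bspec) auto

lemma y_meas[measurable]: "bpi X E k \<in> M \<rightarrow>\<^sub>M count_space UNIV"
  by (rule bpi_measurable) (auto intro: X_meas E_meas)

lemma wald_k: "1 \<le> k \<Longrightarrow> wald M (bpi X E (k - 1)) (\<lambda>j. X k (Suc j)) p"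
  unfolding wald_def wald_axioms_def
  using local_indep[OF prob_space_axioms indep] dX prob_space_axioms by auto

lemma y_rec: "1 \<le> k \<Longrightarrow> bpi X E k x = (\<Sum>j<bpi X E (k - 1) x. X k (Suc j) x) + E k x"
  by (cases k) (auto simp: sum.atLeast1_atMost_eq)

lemma nn_E: "1 \<le> k \<Longrightarrow> (\<integral>\<^sup>+x. f (E k x) \<partial>M) = (\<integral>\<^sup>+z. f z \<partial>measure_pmf q)"
proof -
  assume k: "1 \<le> k"
  have "(\<integral>\<^sup>+z. f z \<partial>measure_pmf q) = (\<integral>\<^sup>+z. f z \<partial>distr M (count_space UNIV) (E k))"
    by (simp add: dE[OF k])
  also have "\<dots> = (\<integral>\<^sup>+x. f (E k x) \<partial>M)"
    by (rule nn_integral_distr) (auto intro: E_meas k)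
  finally show ?thesis by simp
qed

lemma int_E: "1 \<le> k \<Longrightarrow> integral\<^sup>L M (\<lambda>x. f (E k x)) = measure_pmf.expectation q (f :: nat \<Rightarrow> real)"
proof -
  assume k: "1 \<le> k"
  have "measure_pmf.expectation q f = integral\<^sup>L (distr M (count_space UNIV) (E k)) f"
    by (simp add: dE[OF k])
  also have "\<dots> = integral\<^sup>L M (\<lambda>x. f (E k x))"
    by (rule integral_distr) (auto intro: E_meas k)
  finally show ?thesis by simp
qed

lemma pmean_nn: "(\<integral>\<^sup>+z. ennreal (real z) \<partial>measure_pmf p) = ennreal (pmean p)"
  unfolding pmean_def by (rule nn_integral_eq_integral[OF ip]) auto

lemma qmean_nn: "(\<integral>\<^sup>+z. ennreal (real z) \<partial>measure_pmf q) = ennreal (pmean q)"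
  unfolding pmean_def by (rule nn_integral_eq_integral[OF iq]) auto

lemma EY_rec:
  assumes k: "1 \<le> k"
  shows "(\<integral>\<^sup>+x. ennreal (real (bpi X E k x)) \<partial>M) =
    (\<integral>\<^sup>+x. ennreal (real (bpi X E (k - 1) x)) \<partial>M) * ennreal (pmean p) + ennreal (pmean q)"
proof -
  interpret W: wald M "bpi X E (k - 1)" "\<lambda>j. X k (Suc j)" p by (rule wald_k[OF k])
  have [measurable]: "E k \<in> M \<rightarrow>\<^sub>M count_space UNIV" by (rule E_meas[OF k])
  have [measurable]: "\<And>j. X k (Suc j) \<in> M \<rightarrow>\<^sub>M count_space UNIV" by (rule X_meas[OF k]) simp
  have "(\<integral>\<^sup>+x. ennreal (real (bpi X E k x)) \<partial>M) =
     (\<integral>\<^sup>+x. ennreal (\<Sum>j<bpi X E (k - 1) x. real (X k (Suc j) x)) + ennreal (real (E k x)) \<partial>M)"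
    by (intro nn_integral_cong) (simp add: y_rec[OF k] ennreal_plus[symmetric] sum_nonneg del: ennreal_plus)
  also have "\<dots> = (\<integral>\<^sup>+x. ennreal (\<Sum>j<bpi X E (k - 1) x. real (X k (Suc j) x)) \<partial>M) + (\<integral>\<^sup>+x. ennreal (real (E k x)) \<partial>M)"
    by (rule nn_integral_add) measurable
  also have "\<dots> = (\<integral>\<^sup>+x. ennreal (real (bpi X E (k - 1) x)) \<partial>M) * ennreal (pmean p) + ennreal (pmean q)"
    using W.wald[of real] nn_E[OF k, of "\<lambda>z. ennreal (real z)"] by (simp add: pmean_nn qmean_nn)
  finally show ?thesis .
qed


lemma sq_le_of_abs: "\<bar>a\<bar> \<le> b \<Longrightarrow> a\<^sup>2 \<le> (b::real)\<^sup>2"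
proof -
  assume "\<bar>a\<bar> \<le> b"
  then have "\<bar>a\<bar>\<^sup>2 \<le> b\<^sup>2" by (intro power_mono) auto
  then show ?thesis by simp
qed

lemma absdiff_le: "0 \<le> (a::real) \<Longrightarrow> a \<le> T \<Longrightarrow> 0 \<le> b \<Longrightarrow> b \<le> T \<Longrightarrow> \<bar>a - b\<bar> \<le> 2 * T"
  by linarith

lemma nn_to_int:
  fixes f :: "'a \<Rightarrow> real"
  assumes [measurable]: "f \<in> borel_measurable M" and f0: "\<And>x. 0 \<le> f x"
    and le: "(\<integral>\<^sup>+x. ennreal (f x) \<partial>M) \<le> ennreal C" and C: "0 \<le> C"
  shows "integrable M f" and "integral\<^sup>L M f \<le> C"
proof -
  have "(\<integral>\<^sup>+x. ennreal (norm (f x)) \<partial>M) < \<infinity>"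
    using le f0 by (simp add: le_less_trans)
  then show i: "integrable M f" by (intro integrableI_bounded) auto
  have "ennreal (integral\<^sup>L M f) \<le> ennreal C"
    using le nn_integral_eq_integral[OF i] f0 by simp
  then show "integral\<^sup>L M f \<le> C" using C by (simp add: ennreal_le_iff)
qed

lemma markov:
  fixes f :: "'a \<Rightarrow> real"
  assumes [measurable]: "f \<in> borel_measurable M" and f0: "\<And>x. 0 \<le> f x" and i: "integrable M f" and a: "0 < a"
  shows "measure M {x\<in>space M. a \<le> f x} \<le> integral\<^sup>L M f / a"
  using integral_Markov_inequality_measure[OF i _ _ a, of "space M"] f0 by auto

context
  fixes k :: nat and T Ey :: real
  assumes k: "1 \<le> k" and T: "0 < T"
    and Eyi: "integrable M (\<lambda>x. real (bpi X E (k - 1) x))"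
    and Ey: "integral\<^sup>L M (\<lambda>x. real (bpi X E (k - 1) x)) = Ey"
begin

interpretation W: wald M "bpi X E (k - 1)" "\<lambda>j. X k (Suc j)" p by (rule wald_k[OF k])

lemma Ek_meas[measurable]: "E k \<in> M \<rightarrow>\<^sub>M count_space UNIV" by (rule E_meas[OF k])
lemma Xk_meas[measurable]: "X k (Suc j) \<in> M \<rightarrow>\<^sub>M count_space UNIV" by (rule X_meas[OF k]) simp

lemma Ey_nn: "(\<integral>\<^sup>+x. ennreal (real (bpi X E (k - 1) x)) \<partial>M) = ennreal Ey"
  using nn_integral_eq_integral[OF Eyi] Ey by simp

lemma Ey_nonneg: "0 \<le> Ey"
proof -
  have "0 \<le> integral\<^sup>L M (\<lambda>x. real (bpi X E (k - 1) x))" by (rule integral_nonneg_AE) auto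
  also have "\<dots> = Ey" by (rule Ey)
  finally show ?thesis .
qed

lemma bad1:
  assumes B: "0 < B"
  shows "measure M {x\<in>space M. B \<le> real (bpi X E (k - 1) x)} \<le> Ey / B"
proof -
  have "measure M {x\<in>space M. B \<le> real (bpi X E (k - 1) x)} \<le> integral\<^sup>L M (\<lambda>x. real (bpi X E (k - 1) x)) / B"
    by (rule markov[OF _ _ Eyi B]) auto
  then show ?thesis unfolding Ey .
qed

definition Fk :: "'a \<Rightarrow> real" where
  "Fk x = (\<Sum>j<bpi X E (k - 1) x. indicator {z. T \<le> real z} (X k (Suc j) x))"

lemma Fk_meas[measurable]: "Fk \<in> borel_measurable M"
proof -
  define ind :: "nat \<Rightarrow> real" where "ind = indicator {z. T \<le> real z}"
  have im: "ind \<in> count_space UNIV \<rightarrow>\<^sub>M borel" by simp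
  have "(\<lambda>x. ind (X k (Suc j) x)) \<in> borel_measurable M" for j
    by (rule measurable_compose[OF Xk_meas im])
  then have "(\<lambda>x. \<Sum>j<n. ind (X k (Suc j) x)) \<in> borel_measurable M" for n
    by (rule borel_measurable_sum)
  then have "(\<lambda>x. (\<lambda>n x. \<Sum>j<n. ind (X k (Suc j) x)) (bpi X E (k - 1) x) x) \<in> borel_measurable M"
    by (rule measurable_compose_countable[OF _ y_meas])
  then show ?thesis by (simp add: Fk_def[abs_def] ind_def)
qed

lemma bad2: "measure M {x\<in>space M. 1 \<le> Fk x} \<le> Ey * tailp p T"
proof -
  have tp: "0 \<le> tailp p T" by (simp add: tailp_def)
  have w: "(\<integral>\<^sup>+x. ennreal (Fk x) \<partial>M) = ennreal Ey * (\<integral>\<^sup>+z. ennreal (indicator {z. T \<le> real z} z) \<partial>measure_pmf p)"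
    unfolding Fk_def using W.wald[of "indicator {z. T \<le> real z}"] Ey_nn by simp
  also have "(\<integral>\<^sup>+z. ennreal (indicator {z. T \<le> real z} z) \<partial>measure_pmf p) = ennreal (tailp p T)"
    by (simp add: ennreal_indicator tailp_def measure_pmf.emeasure_eq_measure)
  finally have le: "(\<integral>\<^sup>+x. ennreal (Fk x) \<partial>M) \<le> ennreal (Ey * tailp p T)"
    by (simp add: ennreal_mult[OF Ey_nonneg tp])
  have f0: "0 \<le> Fk x" for x unfolding Fk_def by (auto intro: sum_nonneg)
  have i: "integrable M Fk" and il: "integral\<^sup>L M Fk \<le> Ey * tailp p T"
    using nn_to_int[OF Fk_meas f0 le] Ey_nonneg tp by auto
  show ?thesis using markov[OF Fk_meas f0 i, of 1] il by simp
qed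

lemma bad2_sub: "(\<exists>j<bpi X E (k - 1) x. T \<le> real (X k (Suc j) x)) \<Longrightarrow> 1 \<le> Fk x"
proof -
  assume "\<exists>j<bpi X E (k - 1) x. T \<le> real (X k (Suc j) x)"
  then obtain j where j: "j < bpi X E (k - 1) x" "T \<le> real (X k (Suc j) x)" by auto
  have "(1::real) = indicator {z. T \<le> real z} (X k (Suc j) x)" using j by simp
  also have "\<dots> \<le> Fk x" unfolding Fk_def
    by (rule member_le_sum) (use j in auto)
  finally show ?thesis .
qed

lemma bad3: "measure M {x\<in>space M. T \<le> real (E k x)} = tailp q T"
proof -
  have "tailp q T = measure (distr M (count_space UNIV) (E k)) {z. T \<le> real z}"
    by (simp add: tailp_def dE[OF k])
  also have "\<dots> = measure M (E k -` {z. T \<le> real z} \<inter> space M)"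
    by (rule measure_distr) auto
  finally show ?thesis by (simp add: Int_def conj_commute)
qed

definition Ak :: "nat \<Rightarrow> 'a \<Rightarrow> real" where
  "Ak B x = (\<Sum>j<B. (if j < bpi X E (k - 1) x then 1 else 0) * (trunc T (X k (Suc j) x) - tmean p T))"

lemma trunc_meas[measurable]: "trunc T \<in> count_space UNIV \<rightarrow>\<^sub>M borel" by simp

lemma Ak_meas[measurable]: "Ak B \<in> borel_measurable M"
  unfolding Ak_def by measurable

lemma Ak_bound: "\<bar>Ak B x\<bar> \<le> real B * (2 * T)"
proof -
  have "\<bar>Ak B x\<bar> \<le> (\<Sum>j<B. \<bar>(if j < bpi X E (k - 1) x then 1 else 0) * (trunc T (X k (Suc j) x) - tmean p T)\<bar>)"
    unfolding Ak_def by (rule sum_abs)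
  also have "\<dots> \<le> (\<Sum>j<B. 2 * T)"
  proof (rule sum_mono)
    fix j
    have "\<bar>trunc T (X k (Suc j) x) - tmean p T\<bar> \<le> 2 * T"
      using trunc_le[OF T] trunc_nonneg tmean_bounds[OF T, of p]
      by (intro absdiff_le) auto
    then show "\<bar>(if j < bpi X E (k - 1) x then 1 else 0) * (trunc T (X k (Suc j) x) - tmean p T)\<bar> \<le> 2 * T"
      using T by auto
  qed
  finally show ?thesis by simp
qed

lemma Ak2_int: "integrable M (\<lambda>x. (Ak B x)\<^sup>2)"
proof (rule integrable_const_bound[where B="(real B * (2 * T))\<^sup>2"])
  show "AE x in M. norm ((Ak B x)\<^sup>2) \<le> (real B * (2 * T))\<^sup>2"
    using Ak_bound by (auto intro!: AE_I2 sq_le_of_abs)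
qed measurable

lemma Ak2: "integral\<^sup>L M (\<lambda>x. (Ak B x)\<^sup>2) \<le> Ey * tvar p T"
proof -
  let ?g = "\<lambda>z. trunc T z - tmean p T"
  have gb: "\<bar>?g z\<bar> \<le> 2 * T" for z
    using trunc_le[OF T] trunc_nonneg tmean_bounds[OF T, of p] by (intro absdiff_le) auto
  have ti: "integrable (measure_pmf p) (trunc T)"
    by (rule int_bounded_pmf[where B=T]) (use T in \<open>auto simp: trunc_def\<close>)
  have g0: "measure_pmf.expectation p ?g = 0"
    using ti by (simp add: Bochner_Integration.integral_diff tmean_def)
  have eq: "integral\<^sup>L M (\<lambda>x. (Ak B x)\<^sup>2) = (\<Sum>j<B. measure M {x\<in>space M. j < bpi X E (k - 1) x}) * tvar p T"
    unfolding Ak_def tvar_def by (rule W.second_moment[OF gb g0])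
  have "(\<Sum>j<B. emeasure M {x\<in>space M. j < bpi X E (k - 1) x}) \<le> (\<Sum>j. emeasure M {x\<in>space M. j < bpi X E (k - 1) x})"
    by (rule sum_le_suminf[OF summableI]) auto
  also have "\<dots> = ennreal Ey" using W.nn_Y Ey_nn by simp
  finally have "ennreal (\<Sum>j<B. measure M {x\<in>space M. j < bpi X E (k - 1) x}) \<le> ennreal Ey"
    by (simp add: emeasure_eq_measure sum_ennreal)
  then have s: "(\<Sum>j<B. measure M {x\<in>space M. j < bpi X E (k - 1) x}) \<le> Ey"
    using Ey_nonneg by (simp add: ennreal_le_iff)
  have tv: "0 \<le> tvar p T" unfolding tvar_def by (rule integral_nonneg_AE) auto
  show ?thesis unfolding eq using s tv by (rule mult_right_mono)
qed

definition Dk :: "'a \<Rightarrow> real" where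
  "Dk x = trunc T (E k x) - tmean q T"

lemma Dk_meas[measurable]: "Dk \<in> borel_measurable M"
  unfolding Dk_def by measurable

lemma Dk2_int: "integrable M (\<lambda>x. (Dk x)\<^sup>2)"
proof (rule integrable_const_bound[where B="(2 * T)\<^sup>2"])
  have "\<bar>Dk x\<bar> \<le> 2 * T" for x
    unfolding Dk_def using trunc_le[OF T] trunc_nonneg tmean_bounds[OF T, of q] by (intro absdiff_le) auto
  then have "(Dk x)\<^sup>2 \<le> (2 * T)\<^sup>2" for x by (rule sq_le_of_abs)
  then show "AE x in M. norm ((Dk x)\<^sup>2) \<le> (2 * T)\<^sup>2"
    by (intro AE_I2) simp
qed measurable

lemma Dk2: "integral\<^sup>L M (\<lambda>x. (Dk x)\<^sup>2) = tvar q T"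
  unfolding Dk_def tvar_def by (rule int_E[OF k])

end

end

lemma sum_if_lt:
  fixes f :: "nat \<Rightarrow> real" assumes "Y \<le> B"
  shows "(\<Sum>j<B. (if j < Y then 1 else 0) * f j) = (\<Sum>j<Y. f j)"
proof -
  have "(\<Sum>j<B. (if j < Y then 1 else 0) * f j) = (\<Sum>j<B. if j < Y then f j else 0)"
    by (intro sum.cong) auto
  also have "\<dots> = (\<Sum>j\<in>{..<B} \<inter> {j. j < Y}. f j)"
    by (simp add: sum.inter_restrict)
  also have "{..<B} \<inter> {j. j < Y} = {..<Y}" using assms by auto
  finally show ?thesis by simp
qed

lemma decomp:
  fixes Y B e :: nat and xs :: "nat \<Rightarrow> nat" and T m w mb wb :: real
  assumes YB: "Y \<le> B" and xT: "\<forall>j<Y. real (xs j) < T" and eT: "real e < T"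
  shows "real ((\<Sum>j<Y. xs j) + e) - m * real Y - w =
    (\<Sum>j<B. (if j < Y then 1 else 0) * (trunc T (xs j) - mb)) - (m - mb) * real Y + (trunc T e - wb) - (w - wb)"
proof -
  have "(\<Sum>j<B. (if j < Y then 1 else 0) * (trunc T (xs j) - mb)) = (\<Sum>j<Y. trunc T (xs j) - mb)"
    by (rule sum_if_lt[OF YB])
  also have "\<dots> = (\<Sum>j<Y. real (xs j) - mb)"
    using xT by (intro sum.cong) (auto simp: trunc_def)
  also have "\<dots> = real (\<Sum>j<Y. xs j) - real Y * mb"
    by (simp add: sum_subtractf)
  finally have s: "(\<Sum>j<B. (if j < Y then 1 else 0) * (trunc T (xs j) - mb)) = real (\<Sum>j<Y. xs j) - real Y * mb" .
  have te: "trunc T e = real e" using eT by (simp add: trunc_def)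
  show ?thesis unfolding s te by (simp add: algebra_simps)
qed

lemma four_sq: "(a + b + c + d)\<^sup>2 \<le> 4 * (a\<^sup>2 + b\<^sup>2 + c\<^sup>2 + (d::real)\<^sup>2)"
proof -
  have "4 * (a\<^sup>2 + b\<^sup>2 + c\<^sup>2 + d\<^sup>2) - (a + b + c + d)\<^sup>2
     = (a-b)\<^sup>2 + (a-c)\<^sup>2 + (a-d)\<^sup>2 + (b-c)\<^sup>2 + (b-d)\<^sup>2 + (c-d)\<^sup>2"
    by (simp add: power2_eq_square algebra_simps)
  moreover have "0 \<le> (a-b)\<^sup>2 + (a-c)\<^sup>2 + (a-d)\<^sup>2 + (b-c)\<^sup>2 + (b-d)\<^sup>2 + (c-d)\<^sup>2" by simp
  ultimately show ?thesis by linarith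
qed

lemma sum_sq_le_sq_sum:
  fixes f :: "nat \<Rightarrow> real" assumes "\<And>k. k \<in> A \<Longrightarrow> 0 \<le> f k" and "finite A"
  shows "(\<Sum>k\<in>A. (f k)\<^sup>2) \<le> (\<Sum>k\<in>A. f k)\<^sup>2"
proof -
  have "(\<Sum>k\<in>A. (f k)\<^sup>2) \<le> (\<Sum>k\<in>A. f k * (\<Sum>k\<in>A. f k))"
  proof (rule sum_mono)
    fix k assume k: "k \<in> A"
    have "f k \<le> (\<Sum>k\<in>A. f k)" by (rule member_le_sum) (use assms k in auto)
    then show "(f k)\<^sup>2 \<le> f k * (\<Sum>k\<in>A. f k)"
      using assms(1)[OF k] by (simp add: power2_eq_square mult_left_mono)
  qed
  also have "\<dots> = (\<Sum>k\<in>A. f k)\<^sup>2" by (simp add: power2_eq_square sum_distrib_right)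
  finally show ?thesis .
qed

lemma dm_nonneg:
  assumes ip: "integrable (measure_pmf p) real" and T: "0 < T"
  shows "0 \<le> pmean p - tmean p T"
proof -
  have it: "integrable (measure_pmf p) (trunc T)"
    by (rule int_bounded_pmf[where B=T]) (use T in \<open>auto simp: trunc_def\<close>)
  have "tmean p T \<le> pmean p"
    unfolding tmean_def pmean_def by (rule integral_mono[OF it ip]) (auto simp: trunc_def)
  then show ?thesis by simp
qed

lemma tvar_nonneg: "0 \<le> tvar p T"
  unfolding tvar_def by (rule integral_nonneg_AE) auto

context bp begin

lemma main_bound:
  fixes N :: nat and c T \<epsilon> Cy :: real
  assumes N: "1 \<le> N" and c: "0 < c" and T: "0 < T" and \<epsilon>: "0 < \<epsilon>" and Cy: "0 \<le> Cy"
    and EY: "\<And>k. k < N \<Longrightarrow> (\<integral>\<^sup>+x. ennreal (real (bpi X E k x)) \<partial>M) \<le> ennreal (Cy * real N)"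
  shows "measure M {x \<in> space M. \<bar>(1 / (real N * c)) * (\<Sum>k\<in>{1..N}.
              (real (bpi X E k x) - pmean p * real (bpi X E (k - 1) x) - pmean q)\<^sup>2)\<bar> > \<epsilon>}
    \<le> real N * (Cy * real N / real (N^3) + Cy * real N * tailp p T + tailp q T)
      + real N * (Cy * real N) * tvar p T / (\<epsilon> * real N * c / 16)
      + real N * tvar q T / (\<epsilon> * real N * c / 16)
      + (pmean p - tmean p T) * (real N * (Cy * real N)) / sqrt (\<epsilon> * real N * c / 16)
      + (if \<epsilon> * real N * c / 16 \<le> real N * (pmean q - tmean q T)\<^sup>2 then 1 else 0)"
proof -
  define Q where "Q = \<epsilon> * real N * c / 16"
  define B where "B = N ^ 3"
  define dm where "dm = pmean p - tmean p T"
  define dw where "dw = pmean q - tmean q T"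
  define Ey where "Ey = (\<lambda>k. integral\<^sup>L M (\<lambda>x. real (bpi X E (k - 1) x)))"
  have Qp: "0 < Q" unfolding Q_def using \<epsilon> c N by simp
  have Bp: "0 < real B" unfolding B_def using N by simp
  have dm0: "0 \<le> dm" unfolding dm_def by (rule dm_nonneg[OF ip T])
  have Yi: "integrable M (\<lambda>x. real (bpi X E (k - 1) x))" and Ye: "Ey k \<le> Cy * real N"
    if k: "k \<in> {1..N}" for k
  proof -
    have kk: "k - 1 < N" using k by auto
    show "integrable M (\<lambda>x. real (bpi X E (k - 1) x))"
      by (rule nn_to_int(1)[OF _ _ EY[OF kk]]) (use Cy in auto)
    show "Ey k \<le> Cy * real N" unfolding Ey_def
      by (rule nn_to_int(2)[OF _ _ EY[OF kk]]) (use Cy in auto)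
  qed
  have k1: "1 \<le> k" if "k \<in> {1..N}" for k using that by auto
  note ctx = k1 T Yi refl[of "Ey k" for k]
  have Ey_def': "integral\<^sup>L M (\<lambda>x. real (bpi X E (k - 1) x)) = Ey k" for k by (simp add: Ey_def)

  define G where "G = (\<lambda>k. {x\<in>space M. real B \<le> real (bpi X E (k - 1) x)} \<union> {x\<in>space M. 1 \<le> Fk k T x}
      \<union> {x\<in>space M. T \<le> real (E k x)})"
  define SA where "SA = (\<lambda>x. \<Sum>k\<in>{1..N}. (Ak k T B x)\<^sup>2)"
  define SD where "SD = (\<lambda>x. \<Sum>k\<in>{1..N}. (Dk k T x)\<^sup>2)"
  define SY where "SY = (\<lambda>x. \<Sum>k\<in>{1..N}. real (bpi X E (k - 1) x))"
  define EA where "EA = {x\<in>space M. Q \<le> SA x}"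
  define ED where "ED = {x\<in>space M. Q \<le> SD x}"
  define EM where "EM = {x\<in>space M. sqrt Q \<le> dm * SY x}"
  define EC where "EC = {x\<in>space M. Q \<le> real N * dw\<^sup>2}"
  define TG where "TG = {x \<in> space M. \<bar>(1 / (real N * c)) * (\<Sum>k\<in>{1..N}.
              (real (bpi X E k x) - pmean p * real (bpi X E (k - 1) x) - pmean q)\<^sup>2)\<bar> > \<epsilon>}"

  have Fk_m: "Fk k T \<in> borel_measurable M" if "k \<in> {1..N}" for k
    by (rule Fk_meas[OF k1[OF that] T Yi[OF that] Ey_def'])
  have Ak_m: "Ak k T B \<in> borel_measurable M" if "k \<in> {1..N}" for k
    by (rule Ak_meas[OF k1[OF that] T Yi[OF that] Ey_def'])
  have Dk_m: "Dk k T \<in> borel_measurable M" if "k \<in> {1..N}" for k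
    by (rule Dk_meas[OF k1[OF that] T Yi[OF that] Ey_def'])
  have E_m: "E k \<in> M \<rightarrow>\<^sub>M count_space UNIV" if "k \<in> {1..N}" for k
    by (rule E_meas[OF k1[OF that]])
  have G_m: "G k \<in> sets M" if k: "k \<in> {1..N}" for k
  proof -
    note [measurable] = Fk_m[OF k] E_m[OF k]
    show ?thesis unfolding G_def by measurable
  qed
  have SA_m: "SA \<in> borel_measurable M" unfolding SA_def
    by (rule borel_measurable_sum) (rule borel_measurable_power[OF Ak_m])
  have SD_m: "SD \<in> borel_measurable M" unfolding SD_def
    by (rule borel_measurable_sum) (rule borel_measurable_power[OF Dk_m])
  have SY_m[measurable]: "SY \<in> borel_measurable M" unfolding SY_def by measurable
  have EA_m: "EA \<in> sets M" unfolding EA_def using SA_m by measurable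
  have ED_m: "ED \<in> sets M" unfolding ED_def using SD_m by measurable
  have EM_m: "EM \<in> sets M" unfolding EM_def by measurable
  have EC_m: "EC \<in> sets M" unfolding EC_def by (cases "Q \<le> real N * dw\<^sup>2") auto
  have UG_m: "(\<Union>k\<in>{1..N}. G k) \<in> sets M" using G_m by auto

  have incl: "TG \<subseteq> (\<Union>k\<in>{1..N}. G k) \<union> EA \<union> ED \<union> EM \<union> EC"
  proof
    fix x assume xT: "x \<in> TG"
    then have xs: "x \<in> space M" by (simp add: TG_def)
    show "x \<in> (\<Union>k\<in>{1..N}. G k) \<union> EA \<union> ED \<union> EM \<union> EC"
    proof (rule ccontr)
      assume nx: "x \<notin> (\<Union>k\<in>{1..N}. G k) \<union> EA \<union> ED \<union> EM \<union> EC"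
      have good: "bpi X E (k - 1) x \<le> B \<and> (\<forall>j<bpi X E (k - 1) x. real (X k (Suc j) x) < T) \<and> real (E k x) < T"
        if k: "k \<in> {1..N}" for k
      proof -
        have "x \<notin> G k" using nx k by auto
        then have a: "\<not> real B \<le> real (bpi X E (k - 1) x)" and b: "\<not> 1 \<le> Fk k T x" and c': "\<not> T \<le> real (E k x)"
          using xs by (auto simp: G_def)
        have "\<not> (\<exists>j<bpi X E (k - 1) x. T \<le> real (X k (Suc j) x))"
          using bad2_sub[OF k1[OF k] T Yi[OF k] Ey_def'] b by blast
        then show ?thesis using a c' by auto
      qed
      define u where "u = (\<lambda>k. real (bpi X E k x) - pmean p * real (bpi X E (k - 1) x) - pmean q)"
      have ueq: "u k = Ak k T B x - dm * real (bpi X E (k - 1) x) + Dk k T x - dw" if k: "k \<in> {1..N}" for k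
      proof -
        have "u k = real ((\<Sum>j<bpi X E (k - 1) x. X k (Suc j) x) + E k x) - pmean p * real (bpi X E (k - 1) x) - pmean q"
          unfolding u_def using y_rec[OF k1[OF k]] by simp
        also have "\<dots> = (\<Sum>j<B. (if j < bpi X E (k - 1) x then 1 else 0) * (trunc T (X k (Suc j) x) - tmean p T))
            - (pmean p - tmean p T) * real (bpi X E (k - 1) x) + (trunc T (E k x) - tmean q T) - (pmean q - tmean q T)"
          using good[OF k] by (intro decomp) auto
        finally show ?thesis
          by (simp add: Ak_def[OF k1[OF k] T Yi[OF k] Ey_def'] Dk_def[OF k1[OF k] T Yi[OF k] Ey_def'] dm_def dw_def)
      qed
      have usq: "(u k)\<^sup>2 \<le> 4 * ((Ak k T B x)\<^sup>2 + dm\<^sup>2 * (real (bpi X E (k - 1) x))\<^sup>2 + (Dk k T x)\<^sup>2 + dw\<^sup>2)"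
        if k: "k \<in> {1..N}" for k
      proof -
        have "(u k)\<^sup>2 = (Ak k T B x + (- (dm * real (bpi X E (k - 1) x))) + Dk k T x + (- dw))\<^sup>2"
          by (simp add: ueq[OF k])
        also have "\<dots> \<le> 4 * ((Ak k T B x)\<^sup>2 + (- (dm * real (bpi X E (k - 1) x)))\<^sup>2 + (Dk k T x)\<^sup>2 + (- dw)\<^sup>2)"
          by (rule four_sq)
        finally show ?thesis by (simp add: power_mult_distrib)
      qed
      have "(\<Sum>k\<in>{1..N}. (u k)\<^sup>2) \<le> (\<Sum>k\<in>{1..N}. 4 * ((Ak k T B x)\<^sup>2 + dm\<^sup>2 * (real (bpi X E (k - 1) x))\<^sup>2 + (Dk k T x)\<^sup>2 + dw\<^sup>2))"
        by (rule sum_mono) (rule usq)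
      also have "\<dots> = 4 * (SA x + dm\<^sup>2 * (\<Sum>k\<in>{1..N}. (real (bpi X E (k - 1) x))\<^sup>2) + SD x + real N * dw\<^sup>2)"
        by (simp add: SA_def SD_def sum.distrib sum_distrib_left)
      also have "\<dots> \<le> 4 * (SA x + (dm * SY x)\<^sup>2 + SD x + real N * dw\<^sup>2)"
      proof -
        have "(\<Sum>k\<in>{1..N}. (real (bpi X E (k - 1) x))\<^sup>2) \<le> (SY x)\<^sup>2"
          unfolding SY_def by (rule sum_sq_le_sq_sum) auto
        then have "dm\<^sup>2 * (\<Sum>k\<in>{1..N}. (real (bpi X E (k - 1) x))\<^sup>2) \<le> dm\<^sup>2 * (SY x)\<^sup>2"
          by (rule mult_left_mono) simp
        then show ?thesis by (simp add: power_mult_distrib)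
      qed
      also have "\<dots> < 4 * (Q + Q + Q + Q)"
      proof -
        have "SA x < Q" using nx xs by (auto simp: EA_def)
        moreover have "SD x < Q" using nx xs by (auto simp: ED_def)
        moreover have "real N * dw\<^sup>2 < Q" using nx xs by (auto simp: EC_def)
        moreover have "(dm * SY x)\<^sup>2 < Q"
        proof -
          have l: "dm * SY x < sqrt Q" using nx xs by (auto simp: EM_def)
          have "0 \<le> SY x" unfolding SY_def by (auto intro!: sum_nonneg)
          then have "0 \<le> dm * SY x" using dm0 by simp
          then have "(dm * SY x)\<^sup>2 < (sqrt Q)\<^sup>2" using l by (intro power_strict_mono) auto
          then show ?thesis using Qp by simp
        qed
        ultimately show ?thesis by simp
      qed
      finally have lt: "(\<Sum>k\<in>{1..N}. (u k)\<^sup>2) < \<epsilon> * real N * c" unfolding Q_def by (simp add: mult.commute mult.left_commute)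
      have s0: "0 \<le> (\<Sum>k\<in>{1..N}. (u k)\<^sup>2)" by (auto intro: sum_nonneg)
      have Nc: "0 < real N * c" using N c by simp
      have "\<bar>(1 / (real N * c)) * (\<Sum>k\<in>{1..N}. (u k)\<^sup>2)\<bar> = (\<Sum>k\<in>{1..N}. (u k)\<^sup>2) / (real N * c)"
        using s0 Nc by simp
      also have "\<dots> < \<epsilon>" using lt Nc by (simp add: divide_less_eq mult.commute mult.left_commute)
      finally show False using xT by (simp add: TG_def u_def)
    qed
  qed
  have tp0: "0 \<le> tailp p T" "0 \<le> tailp q T" by (auto simp: tailp_def)
  have fin: "finite {1..N}" by simp
  have cardN: "real (card {1..N}) = real N" by simp
  have mUG: "measure M (\<Union>k\<in>{1..N}. G k) \<le> real N * (Cy * real N / real (N^3) + Cy * real N * tailp p T + tailp q T)"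
  proof -
    have "measure M (\<Union>k\<in>{1..N}. G k) \<le> (\<Sum>k\<in>{1..N}. measure M (G k))"
      by (rule finite_measure_subadditive_finite[OF fin]) (use G_m in auto)
    also have "\<dots> \<le> (\<Sum>k\<in>{1..N}. Cy * real N / real (N^3) + Cy * real N * tailp p T + tailp q T)"
    proof (rule sum_mono)
      fix k assume k: "k \<in> {1..N}"
      note h = k1[OF k] T Yi[OF k] Ey_def'
      note [measurable] = Fk_m[OF k] E_m[OF k]
      have "measure M (G k) \<le> measure M ({x\<in>space M. real B \<le> real (bpi X E (k - 1) x)} \<union> {x\<in>space M. 1 \<le> Fk k T x})
          + measure M {x\<in>space M. T \<le> real (E k x)}"
        unfolding G_def by (rule measure_Un_le) measurable
      also have "\<dots> \<le> measure M {x\<in>space M. real B \<le> real (bpi X E (k - 1) x)} + measure M {x\<in>space M. 1 \<le> Fk k T x}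
          + measure M {x\<in>space M. T \<le> real (E k x)}"
        by (intro add_mono measure_Un_le order_refl) measurable
      also have "\<dots> \<le> Ey k / real B + Ey k * tailp p T + tailp q T"
        using bad1[OF h Bp] bad2[OF h] bad3[OF h] by linarith
      also have "\<dots> \<le> Cy * real N / real B + Cy * real N * tailp p T + tailp q T"
        using Ye[OF k] Bp tp0 by (intro add_mono divide_right_mono mult_right_mono) auto
      finally show "measure M (G k) \<le> Cy * real N / real (N^3) + Cy * real N * tailp p T + tailp q T"
        by (simp add: B_def)
    qed
    also have "\<dots> = real N * (Cy * real N / real (N^3) + Cy * real N * tailp p T + tailp q T)"
      by simp
    finally show ?thesis .
  qed
  have mEA: "measure M EA \<le> real N * (Cy * real N) * tvar p T / Q"
  proof -
    have i: "integrable M SA" unfolding SA_def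
      by (rule Bochner_Integration.integrable_sum) (rule Ak2_int[OF k1 T Yi Ey_def'], auto)
    have "integral\<^sup>L M SA = (\<Sum>k\<in>{1..N}. integral\<^sup>L M (\<lambda>x. (Ak k T B x)\<^sup>2))"
      unfolding SA_def by (rule Bochner_Integration.integral_sum) (rule Ak2_int[OF k1 T Yi Ey_def'], auto)
    also have "\<dots> \<le> (\<Sum>k\<in>{1..N}. Cy * real N * tvar p T)"
    proof (rule sum_mono)
      fix k assume k: "k \<in> {1..N}"
      have "integral\<^sup>L M (\<lambda>x. (Ak k T B x)\<^sup>2) \<le> Ey k * tvar p T" by (rule Ak2[OF k1[OF k] T Yi[OF k] Ey_def'])
      also have "\<dots> \<le> Cy * real N * tvar p T" by (rule mult_right_mono[OF Ye[OF k] tvar_nonneg])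
      finally show "integral\<^sup>L M (\<lambda>x. (Ak k T B x)\<^sup>2) \<le> Cy * real N * tvar p T" .
    qed
    also have "\<dots> = real N * (Cy * real N) * tvar p T" by simp
    finally have le: "integral\<^sup>L M SA \<le> real N * (Cy * real N) * tvar p T" .
    have "measure M EA \<le> integral\<^sup>L M SA / Q"
      unfolding EA_def by (rule markov[OF SA_m _ i Qp]) (auto simp: SA_def intro!: sum_nonneg)
    also have "\<dots> \<le> real N * (Cy * real N) * tvar p T / Q" using le Qp by (simp add: divide_right_mono)
    finally show ?thesis .
  qed
  have mED: "measure M ED \<le> real N * tvar q T / Q"
  proof -
    have i: "integrable M SD" unfolding SD_def
      by (rule Bochner_Integration.integrable_sum) (rule Dk2_int[OF k1 T Yi Ey_def'], auto)
    have "integral\<^sup>L M SD = (\<Sum>k\<in>{1..N}. integral\<^sup>L M (\<lambda>x. (Dk k T x)\<^sup>2))"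
      unfolding SD_def by (rule Bochner_Integration.integral_sum) (rule Dk2_int[OF k1 T Yi Ey_def'], auto)
    also have "\<dots> = (\<Sum>k\<in>{1..N}. tvar q T)"
      by (rule sum.cong[OF refl]) (rule Dk2[OF k1 T Yi Ey_def'], auto)
    also have "\<dots> = real N * tvar q T" by simp
    finally have le: "integral\<^sup>L M SD = real N * tvar q T" .
    have "measure M ED \<le> integral\<^sup>L M SD / Q"
      unfolding ED_def by (rule markov[OF SD_m _ i Qp]) (auto simp: SD_def intro!: sum_nonneg)
    then show ?thesis using le by simp
  qed
  have mEM: "measure M EM \<le> dm * (real N * (Cy * real N)) / sqrt Q"
  proof -
    have iY: "integrable M SY" unfolding SY_def
      by (rule Bochner_Integration.integrable_sum) (rule Yi)
    have i: "integrable M (\<lambda>x. dm * SY x)" using iY by simp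
    have "integral\<^sup>L M (\<lambda>x. dm * SY x) = dm * (\<Sum>k\<in>{1..N}. Ey k)"
      unfolding SY_def Ey_def using Yi by (simp add: Bochner_Integration.integral_sum)
    also have "\<dots> \<le> dm * (\<Sum>k\<in>{1..N}. Cy * real N)"
      by (intro mult_left_mono[OF _ dm0] sum_mono Ye)
    also have "\<dots> = dm * (real N * (Cy * real N))" by simp
    finally have le: "integral\<^sup>L M (\<lambda>x. dm * SY x) \<le> dm * (real N * (Cy * real N))" .
    have sq: "0 < sqrt Q" using Qp by simp
    have "measure M EM \<le> integral\<^sup>L M (\<lambda>x. dm * SY x) / sqrt Q"
    proof (unfold EM_def, rule markov[OF _ _ i sq])
      fix x have "0 \<le> SY x" unfolding SY_def by (auto intro!: sum_nonneg)
      then show "0 \<le> dm * SY x" using dm0 by simp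
    qed simp
    also have "\<dots> \<le> dm * (real N * (Cy * real N)) / sqrt Q" using le sq by (simp add: divide_right_mono)
    finally show ?thesis .
  qed
  have mEC: "measure M EC \<le> (if Q \<le> real N * dw\<^sup>2 then 1 else 0)"
    unfolding EC_def by (cases "Q \<le> real N * dw\<^sup>2") (auto simp: prob_space)
  have "measure M TG \<le> measure M ((\<Union>k\<in>{1..N}. G k) \<union> EA \<union> ED \<union> EM \<union> EC)"
    by (rule finite_measure_mono[OF incl]) (use UG_m EA_m ED_m EM_m EC_m in auto)
  also have "\<dots> \<le> measure M (\<Union>k\<in>{1..N}. G k) + measure M EA + measure M ED + measure M EM + measure M EC"
  proof -
    have "measure M ((\<Union>k\<in>{1..N}. G k) \<union> EA \<union> ED \<union> EM \<union> EC) \<le> measure M ((\<Union>k\<in>{1..N}. G k) \<union> EA \<union> ED \<union> EM) + measure M EC"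
      by (rule measure_Un_le) (use UG_m EA_m ED_m EM_m EC_m in auto)
    moreover have "measure M ((\<Union>k\<in>{1..N}. G k) \<union> EA \<union> ED \<union> EM) \<le> measure M ((\<Union>k\<in>{1..N}. G k) \<union> EA \<union> ED) + measure M EM"
      by (rule measure_Un_le) (use UG_m EA_m ED_m EM_m EC_m in auto)
    moreover have "measure M ((\<Union>k\<in>{1..N}. G k) \<union> EA \<union> ED) \<le> measure M ((\<Union>k\<in>{1..N}. G k) \<union> EA) + measure M ED"
      by (rule measure_Un_le) (use UG_m EA_m ED_m EM_m EC_m in auto)
    moreover have "measure M ((\<Union>k\<in>{1..N}. G k) \<union> EA) \<le> measure M (\<Union>k\<in>{1..N}. G k) + measure M EA"
      by (rule measure_Un_le) (use UG_m EA_m ED_m EM_m EC_m in auto)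
    ultimately show ?thesis by linarith
  qed
  also have "\<dots> \<le> real N * (Cy * real N / real (N^3) + Cy * real N * tailp p T + tailp q T)
      + real N * (Cy * real N) * tvar p T / Q + real N * tvar q T / Q
      + dm * (real N * (Cy * real N)) / sqrt Q + (if Q \<le> real N * dw\<^sup>2 then 1 else 0)"
    using mUG mEA mED mEM mEC by linarith
  finally show ?thesis unfolding TG_def Q_def dm_def dw_def .
qed

end

lemma pmean_nonneg: "0 \<le> pmean p"
  unfolding pmean_def by (rule integral_nonneg_AE) auto

lemma tm_le_mean: "integrable (measure_pmf p) real \<Longrightarrow> 0 < T \<Longrightarrow> tmean p T \<le> pmean p"
  using dm_nonneg by fastforce

context bp begin

lemma EY_bound: "(\<integral>\<^sup>+x. ennreal (real (bpi X E k x)) \<partial>M) \<le> ennreal (real k * pmean q * (max 1 (pmean p)) ^ k)"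
proof (induction k)
  case 0 then show ?case by simp
next
  case (Suc k)
  let ?M = "max 1 (pmean p)" and ?m = "pmean p" and ?w = "pmean q"
  have m0: "0 \<le> ?m" "0 \<le> ?w" by (auto intro: pmean_nonneg)
  have M1: "1 \<le> ?M" "?m \<le> ?M" by auto
  have "(\<integral>\<^sup>+x. ennreal (real (bpi X E (Suc k) x)) \<partial>M) =
      (\<integral>\<^sup>+x. ennreal (real (bpi X E k x)) \<partial>M) * ennreal ?m + ennreal ?w"
    using EY_rec[of "Suc k"] by simp
  also have "\<dots> \<le> ennreal (real k * ?w * ?M ^ k) * ennreal ?m + ennreal ?w"
    by (intro add_mono mult_right_mono Suc.IH) auto
  also have "\<dots> = ennreal (real k * ?w * ?M ^ k * ?m + ?w)"
    using m0 by (simp add: ennreal_mult[symmetric] ennreal_plus[symmetric] del: ennreal_plus)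
  also have "\<dots> \<le> ennreal (real (Suc k) * ?w * ?M ^ Suc k)"
  proof (rule ennreal_leI)
    have a: "real k * ?w * ?M ^ k * ?m \<le> real k * ?w * ?M ^ k * ?M"
      using m0 M1 by (intro mult_left_mono) auto
    have "1 \<le> ?M ^ Suc k" using M1 by (intro one_le_power) auto
    then have b: "?w \<le> ?w * ?M ^ Suc k"
      using m0 mult_left_mono[of 1 "?M ^ Suc k" ?w] by simp
    have "real k * ?w * ?M ^ k * ?m + ?w \<le> real k * ?w * ?M ^ Suc k + ?w * ?M ^ Suc k"
      using a b by (simp add: mult.assoc mult.commute mult.left_commute)
    also have "\<dots> = real (Suc k) * ?w * ?M ^ Suc k" by (simp add: algebra_simps)
    finally show "real k * ?w * ?M ^ k * ?m + ?w \<le> real (Suc k) * ?w * ?M ^ Suc k" .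
  qed
  finally show ?case .
qed


lemma bound_n:
  fixes n :: nat and c R \<epsilon> Cy KG KH :: real
  assumes n: "1 \<le> n" and c: "2 \<le> c" and R: "2 \<le> R" and \<epsilon>: "0 < \<epsilon>" and Cy: "0 \<le> Cy"
    and KG: "0 \<le> KG" and KH: "0 \<le> KH"
    and PG: "measure_pmf.expectation p (phi (1/c)) \<le> KG / (real n)\<^sup>2"
    and PH: "measure_pmf.expectation q (phi (1/c)) \<le> KH / real n"
    and m2: "pmean p \<le> 2"
    and EY: "\<And>k. k < n \<Longrightarrow> (\<integral>\<^sup>+x. ennreal (real (bpi X E k x)) \<partial>M) \<le> ennreal (Cy * real n)"
  shows "measure M {x \<in> space M. \<bar>(1 / (real n * c)) * (\<Sum>k\<in>{1..n}.
              (real (bpi X E k x) - pmean p * real (bpi X E (k - 1) x) - pmean q)\<^sup>2)\<bar> > \<epsilon>}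
    \<le> Cy / real n + 2 * (Cy * KG + KH) / R
      + 16 * Cy / \<epsilon> * ((2 * exp 4 + 2 * R) * KG * (c / real n) + 2 * \<bar>real n * (pmean p - 1)\<bar> / c + 4 * KG / real n)
      + 16 / \<epsilon> * ((2 * exp 4 + 2 * R) * KH * (c / real n) + pmean q / c)
      + 8 * Cy * KG * sqrt ((c / real n) / \<epsilon>)
      + (if \<epsilon> \<le> 64 * (c / real n) * (1 / real n) * KH\<^sup>2 then 1 else 0)"
proof -
  define T where "T = R * c"
  define \<Phi> where "\<Phi> = measure_pmf.expectation p (phi (1/c))"
  define \<Psi> where "\<Psi> = measure_pmf.expectation q (phi (1/c))"
  define CR where "CR = 2 * exp 4 + 2 * R"
  define Q where "Q = \<epsilon> * real n * c / 16"
  have c0: "0 < c" using c by simp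
  have T0: "0 < T" unfolding T_def using c R by simp
  have n0: "0 < real n" using n by simp
  have Qp: "0 < Q" unfolding Q_def using \<epsilon> c0 n0 by simp
  have CR0: "0 \<le> CR" unfolding CR_def using R by simp
  have mb: "measure M {x \<in> space M. \<bar>(1 / (real n * c)) * (\<Sum>k\<in>{1..n}.
              (real (bpi X E k x) - pmean p * real (bpi X E (k - 1) x) - pmean q)\<^sup>2)\<bar> > \<epsilon>}
    \<le> real n * (Cy * real n / real (n^3) + Cy * real n * tailp p T + tailp q T)
      + real n * (Cy * real n) * tvar p T / Q
      + real n * tvar q T / Q
      + (pmean p - tmean p T) * (real n * (Cy * real n)) / sqrt Q
      + (if Q \<le> real n * (pmean q - tmean q T)\<^sup>2 then 1 else 0)"
    unfolding Q_def by (rule main_bound[OF n c0 T0 \<epsilon> Cy EY])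
  have tp: "tailp p T \<le> (2 / R) * \<Phi>" unfolding T_def \<Phi>_def by (rule tail_bound[OF ip c R])
  have tq: "tailp q T \<le> (2 / R) * \<Psi>" unfolding T_def \<Psi>_def by (rule tail_bound[OF iq c R])
  have dmb: "0 \<le> pmean p - tmean p T" "pmean p - tmean p T \<le> 2 * c * \<Phi>"
    using mean_shift[OF ip c R] unfolding T_def \<Phi>_def by auto
  have dwb: "0 \<le> pmean q - tmean q T" "pmean q - tmean q T \<le> 2 * c * \<Psi>"
    using mean_shift[OF iq c R] unfolding T_def \<Psi>_def by auto
  have vp: "tvar p T \<le> CR * c\<^sup>2 * \<Phi> + tmean p T * (1 - tmean p T)"
    using var_bound[OF ip c R] unfolding T_def \<Phi>_def CR_def by simp
  have vq: "tvar q T \<le> CR * c\<^sup>2 * \<Psi> + tmean q T * (1 - tmean q T)"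
    using var_bound[OF iq c R] unfolding T_def \<Psi>_def CR_def by simp
  have tmp: "0 \<le> tmean p T" "0 \<le> tmean q T" using tmean_bounds[OF T0] by auto
  have \<Phi>0: "0 \<le> \<Phi>" unfolding \<Phi>_def by (rule phi_exp_nonneg[OF ip c R])
  have \<Psi>0: "0 \<le> \<Psi>" unfolding \<Psi>_def by (rule phi_exp_nonneg[OF iq c R])
  have PG': "\<Phi> \<le> KG / (real n)\<^sup>2" using PG by (simp add: \<Phi>_def)
  have PH': "\<Psi> \<le> KH / real n" using PH by (simp add: \<Psi>_def)

  have t1: "real n * (Cy * real n / real (n^3) + Cy * real n * tailp p T + tailp q T) \<le> Cy / real n + 2 * (Cy * KG + KH) / R"
  proof -
    have a: "real n * (Cy * real n / real (n^3)) = Cy / real n"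
      using n0 by (simp add: field_simps power3_eq_cube)
    have tp': "tailp p T \<le> (2 / R) * (KG / (real n)\<^sup>2)"
      using tp mult_left_mono[OF PG', of "2/R"] R by simp
    have "Cy * real n * tailp p T \<le> Cy * real n * ((2 / R) * (KG / (real n)\<^sup>2))"
      by (rule mult_left_mono[OF tp']) (use Cy n0 in simp)
    then have "real n * (Cy * real n * tailp p T) \<le> real n * (Cy * real n * ((2 / R) * (KG / (real n)\<^sup>2)))"
      by (rule mult_left_mono) (use n0 in simp)
    also have "\<dots> = 2 * Cy * KG / R" using n0 by (simp add: field_simps power2_eq_square)
    finally have b: "real n * (Cy * real n * tailp p T) \<le> 2 * Cy * KG / R" .
    have tq': "tailp q T \<le> (2 / R) * (KH / real n)"
      using tq mult_left_mono[OF PH', of "2/R"] R by simp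
    have "real n * tailp q T \<le> real n * ((2 / R) * (KH / real n))"
      by (rule mult_left_mono[OF tq']) (use n0 in simp)
    also have "\<dots> = 2 * KH / R" using n0 by (simp add: field_simps)
    finally have c': "real n * tailp q T \<le> 2 * KH / R" .
    have "real n * (Cy * real n / real (n^3) + Cy * real n * tailp p T + tailp q T)
        = real n * (Cy * real n / real (n^3)) + real n * (Cy * real n * tailp p T) + real n * tailp q T"
      by (simp add: algebra_simps)
    also have "\<dots> \<le> Cy / real n + 2 * Cy * KG / R + 2 * KH / R" using a b c' by linarith
    also have "\<dots> = Cy / real n + 2 * (Cy * KG + KH) / R" by (simp add: ring_distribs add_divide_distrib)
    finally show ?thesis .
  qed

  have t2: "real n * (Cy * real n) * tvar p T / Q \<le>
      16 * Cy / \<epsilon> * (CR * KG * (c / real n) + 2 * \<bar>real n * (pmean p - 1)\<bar> / c + 4 * KG / real n)"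
  proof -
    have tm1: "tmean p T * (1 - tmean p T) \<le> 2 * (\<bar>1 - pmean p\<bar> + 2 * c * (KG / (real n)\<^sup>2))"
    proof (cases "1 - tmean p T \<le> 0")
      case True
      then have "tmean p T * (1 - tmean p T) \<le> 0" using tmp by (simp add: mult_nonneg_nonpos)
      moreover have "0 \<le> 2 * (\<bar>1 - pmean p\<bar> + 2 * c * (KG / (real n)\<^sup>2))" using c KG by simp
      ultimately show ?thesis by linarith
    next
      case False
      have "tmean p T \<le> 2" using tm_le_mean[OF ip T0] m2 by simp
      moreover have "1 - tmean p T \<le> \<bar>1 - pmean p\<bar> + 2 * c * (KG / (real n)\<^sup>2)"
      proof -
        have "2 * c * \<Phi> \<le> 2 * c * (KG / (real n)\<^sup>2)" using PG' c by (intro mult_left_mono) auto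
        then show ?thesis using dmb by linarith
      qed
      ultimately show ?thesis using False tmp by (intro mult_mono) auto
    qed
    have v: "tvar p T \<le> CR * c\<^sup>2 * (KG / (real n)\<^sup>2) + 2 * (\<bar>1 - pmean p\<bar> + 2 * c * (KG / (real n)\<^sup>2))"
    proof -
      have "CR * c\<^sup>2 * \<Phi> \<le> CR * c\<^sup>2 * (KG / (real n)\<^sup>2)" using PG' CR0 by (intro mult_left_mono) auto
      then show ?thesis using vp tm1 by linarith
    qed
    have pos: "0 \<le> real n * (Cy * real n) / Q" using Cy Qp n0 by simp
    have "real n * (Cy * real n) * tvar p T / Q = (real n * (Cy * real n) / Q) * tvar p T" by simp
    also have "\<dots> \<le> (real n * (Cy * real n) / Q) * (CR * c\<^sup>2 * (KG / (real n)\<^sup>2) + 2 * (\<bar>1 - pmean p\<bar> + 2 * c * (KG / (real n)\<^sup>2)))"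
      by (rule mult_left_mono[OF v pos])
    also have "\<dots> = 16 * Cy / \<epsilon> * (CR * KG * (c / real n) + 2 * \<bar>real n * (pmean p - 1)\<bar> / c + 4 * KG / real n)"
    proof -
      have "\<bar>real n * (pmean p - 1)\<bar> = real n * \<bar>1 - pmean p\<bar>" using n0 by (simp add: abs_mult abs_minus_commute)
      then show ?thesis unfolding Q_def using n0 c0 \<epsilon> by (simp add: field_simps power2_eq_square)
    qed
    finally show ?thesis .
  qed

  have t3: "real n * tvar q T / Q \<le> 16 / \<epsilon> * (CR * KH * (c / real n) + pmean q / c)"
  proof -
    have "tmean q T * (1 - tmean q T) \<le> pmean q"
    proof -
      have "tmean q T * (1 - tmean q T) \<le> tmean q T" using tmp by (simp add: algebra_simps)
      then show ?thesis using tm_le_mean[OF iq T0] by linarith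
    qed
    moreover have "CR * c\<^sup>2 * \<Psi> \<le> CR * c\<^sup>2 * (KH / real n)" using PH' CR0 by (intro mult_left_mono) auto
    ultimately have v: "tvar q T \<le> CR * c\<^sup>2 * (KH / real n) + pmean q" using vq by linarith
    have pos: "0 \<le> real n / Q" using Qp n0 by simp
    have "real n * tvar q T / Q = (real n / Q) * tvar q T" by simp
    also have "\<dots> \<le> (real n / Q) * (CR * c\<^sup>2 * (KH / real n) + pmean q)" by (rule mult_left_mono[OF v pos])
    also have "\<dots> = 16 / \<epsilon> * (CR * KH * (c / real n) + pmean q / c)"
      unfolding Q_def using n0 c0 \<epsilon> by (simp add: field_simps power2_eq_square)
    finally show ?thesis .
  qed

  have t4: "(pmean p - tmean p T) * (real n * (Cy * real n)) / sqrt Q \<le> 8 * Cy * KG * sqrt ((c / real n) / \<epsilon>)"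
  proof -
    have d: "pmean p - tmean p T \<le> 2 * c * (KG / (real n)\<^sup>2)"
      using dmb(2) mult_left_mono[OF PG', of "2 * c"] c by simp
    have sq: "0 < sqrt Q" using Qp by simp
    have pos: "0 \<le> real n * (Cy * real n) / sqrt Q" using Cy n0 sq by simp
    have "(pmean p - tmean p T) * (real n * (Cy * real n)) / sqrt Q = (pmean p - tmean p T) * (real n * (Cy * real n) / sqrt Q)" by simp
    also have "\<dots> \<le> 2 * c * (KG / (real n)\<^sup>2) * (real n * (Cy * real n) / sqrt Q)" by (rule mult_right_mono[OF d pos])
    also have "\<dots> = 2 * c * KG * Cy / sqrt Q" using n0 by (simp add: field_simps power2_eq_square)
    also have "\<dots> = 8 * Cy * KG * sqrt ((c / real n) / \<epsilon>)"
    proof -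
      have "sqrt ((c / real n) / \<epsilon>) * sqrt Q = sqrt (((c / real n) / \<epsilon>) * Q)" by (rule real_sqrt_mult[symmetric])
      also have "((c / real n) / \<epsilon>) * Q = (c / 4)\<^sup>2" unfolding Q_def using n0 \<epsilon> by (simp add: field_simps power2_eq_square)
      also have "sqrt ((c / 4)\<^sup>2) = c / 4" using c0 by simp
      finally have e: "sqrt ((c / real n) / \<epsilon>) * sqrt Q = c / 4" .
      show ?thesis using sq e by (simp add: field_simps)
    qed
    finally show ?thesis .
  qed

  have t5: "(if Q \<le> real n * (pmean q - tmean q T)\<^sup>2 then 1 else 0) \<le> (if \<epsilon> \<le> 64 * (c / real n) * (1 / real n) * KH\<^sup>2 then 1 else (0::real))"
  proof (cases "Q \<le> real n * (pmean q - tmean q T)\<^sup>2")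
    case True
    have d: "pmean q - tmean q T \<le> 2 * c * (KH / real n)"
      using dwb(2) mult_left_mono[OF PH', of "2 * c"] c by simp
    have "(pmean q - tmean q T)\<^sup>2 \<le> (2 * c * (KH / real n))\<^sup>2"
      using d dwb(1) by (intro power_mono) auto
    then have "real n * (pmean q - tmean q T)\<^sup>2 \<le> real n * (2 * c * (KH / real n))\<^sup>2"
      using n0 by (intro mult_left_mono) auto
    with True have "\<epsilon> * real n * c / 16 \<le> real n * (2 * c * (KH / real n))\<^sup>2" unfolding Q_def by linarith
    then have "\<epsilon> \<le> 64 * (c / real n) * (1 / real n) * KH\<^sup>2"
      using n0 c0 by (simp add: field_simps power2_eq_square)
    then show ?thesis using True by simp
  qed auto

  show ?thesis using mb t1 t2 t3 t4 t5 unfolding CR_def by linarith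
qed

end

lemma c_to_inf:
  fixes c :: "nat \<Rightarrow> real"
  assumes c_pos: "\<And>n. c n > 0" and C2: "(\<lambda>n. real n / (c n)\<^sup>2) \<longlonglongrightarrow> \<gamma>0" and g: "\<gamma>0 \<ge> 0"
  shows "filterlim c at_top sequentially"
  unfolding filterlim_at_top
proof
  fix Z :: real
  have e1: "eventually (\<lambda>n. real n / (c n)\<^sup>2 < \<gamma>0 + 1) sequentially"
    using C2 by (rule order_tendstoD) simp
  have e2: "eventually (\<lambda>n. (\<gamma>0 + 1) * Z\<^sup>2 + 1 \<le> real n) sequentially"
    using filterlim_real_sequentially unfolding filterlim_at_top by auto
  show "eventually (\<lambda>n. Z \<le> c n) sequentially"
    using e1 e2
  proof eventually_elim
    case (elim n)
    have cp: "0 < (c n)\<^sup>2" using c_pos[of n] by simp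
    have "real n < (\<gamma>0 + 1) * (c n)\<^sup>2" using elim(1) cp by (simp add: field_simps)
    then have "(\<gamma>0 + 1) * Z\<^sup>2 < (\<gamma>0 + 1) * (c n)\<^sup>2" using elim(2) by linarith
    then have "Z\<^sup>2 < (c n)\<^sup>2" using g by simp
    then have "\<bar>Z\<bar>\<^sup>2 < (c n)\<^sup>2" by (simp only: power2_abs)
    then have "\<bar>Z\<bar> < c n" by (rule power2_less_imp_less[OF _ less_imp_le[OF c_pos[of n]]])
    then show ?case by simp
  qed
qed

theorem lemma4p5:
  fixes M :: "nat \<Rightarrow> 'a measure"
    and xi :: "nat \<Rightarrow> nat \<Rightarrow> nat \<Rightarrow> 'a \<Rightarrow> nat"
    and eta :: "nat \<Rightarrow> nat \<Rightarrow> 'a \<Rightarrow> nat"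
    and p q :: "nat \<Rightarrow> nat pmf"
    and c :: "nat \<Rightarrow> real"
    and m \<omega>n :: "nat \<Rightarrow> real"
    and G H :: "nat \<Rightarrow> real \<Rightarrow> real"
    and \<gamma>0 a \<omega> :: real
  assumes prob: "\<And>n. prob_space (M n)"
    and indep: "\<And>n. prob_space.indep_vars (M n) (\<lambda>_. count_space UNIV)
        (\<lambda>i. case i of Inl (k, j) \<Rightarrow> xi n k j | Inr k \<Rightarrow> eta n k)
        ({(k, j). 1 \<le> k \<and> 1 \<le> j} <+> {k. 1 \<le> k})"
    and distr_xi: "\<And>n k j. 1 \<le> k \<Longrightarrow> 1 \<le> j \<Longrightarrow>
        distr (M n) (count_space UNIV) (xi n k j) = measure_pmf (p n)"
    and distr_eta: "\<And>n k. 1 \<le> k \<Longrightarrow>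
        distr (M n) (count_space UNIV) (eta n k) = measure_pmf (q n)"
    and mean_xi_finite: "\<And>n. integrable (measure_pmf (p n)) real"
    and mean_eta_finite: "\<And>n. integrable (measure_pmf (q n)) real"
    and m_def: "\<And>n. m n = pmean (p n)"
    and \<omega>n_def: "\<And>n. \<omega>n n = pmean (q n)"
    and c_pos: "\<And>n. c n > 0"
    and G_def: "\<And>n s. G n s = (real n)\<^sup>2 * ((1 - m n * s / c n) - pgf (p n) (1 - s / c n))"
    and H_def: "\<And>n s. H n s = real n * ((1 - \<omega>n n * s / c n) - pgf (q n) (1 - s / c n))"
    and C1: "filterlim (\<lambda>n. real n / c n) at_top sequentially"
    and C2: "(\<lambda>n. real n / (c n)\<^sup>2) \<longlonglongrightarrow> \<gamma>0" and "\<gamma>0 \<ge> 0"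
    and D1: "(\<lambda>n. real n * (m n - 1)) \<longlonglongrightarrow> a"
    and D2_lip: "\<And>L. \<exists>K. \<forall>\<^sub>F n in sequentially. \<forall>x\<in>{0..L}. \<forall>y\<in>{0..L}.
        \<bar>G n x - G n y\<bar> \<le> K * \<bar>x - y\<bar>"
    and D2_lim: "\<exists>G0. continuous_on {0..} G0 \<and> (\<forall>s\<ge>0. (\<lambda>n. G n s) \<longlonglongrightarrow> G0 s)"
    and E1: "\<omega>n \<longlonglongrightarrow> \<omega>" and "\<omega> \<ge> 0"
    and E2_lip: "\<And>L. \<exists>K. \<forall>\<^sub>F n in sequentially. \<forall>x\<in>{0..L}. \<forall>y\<in>{0..L}.
        \<bar>H n x - H n y\<bar> \<le> K * \<bar>x - y\<bar>"
    and E2_lim: "\<exists>H0. continuous_on {0..} H0 \<and> (\<forall>s\<ge>0. (\<lambda>n. H n s) \<longlonglongrightarrow> H0 s)"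
  shows "\<forall>\<epsilon>>0. (\<lambda>n. measure (M n) {x \<in> space (M n).
           \<bar>(1 / (real n * c n)) * (\<Sum>k\<in>{1..n}.
              (real (bpi (xi n) (eta n) k x) - m n * real (bpi (xi n) (eta n) (k - 1) x) - \<omega>n n)\<^sup>2)\<bar>
           > \<epsilon>}) \<longlonglongrightarrow> 0"
proof (intro allI impI)
  fix \<epsilon> :: real assume \<epsilon>: "0 < \<epsilon>"
  have bpn: "bp (M n) (xi n) (eta n) (p n) (q n)" for n
    unfolding bp_def bp_axioms_def using prob indep distr_xi distr_eta mean_xi_finite mean_eta_finite by auto
  obtain KG where KG: "\<forall>\<^sub>F n in sequentially. \<forall>x\<in>{0..1}. \<forall>y\<in>{0..1}. \<bar>G n x - G n y\<bar> \<le> KG * \<bar>x - y\<bar>"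
    using D2_lip[of 1] by blast
  obtain KH where KH: "\<forall>\<^sub>F n in sequentially. \<forall>x\<in>{0..1}. \<forall>y\<in>{0..1}. \<bar>H n x - H n y\<bar> \<le> KH * \<bar>x - y\<bar>"
    using E2_lip[of 1] by blast
  define KG0 where "KG0 = max KG 0"
  define KH0 where "KH0 = max KH 0"
  define Cy where "Cy = (\<omega> + 1) * exp (\<bar>a\<bar> + 1)"
  have Cy0: "0 \<le> Cy" unfolding Cy_def using \<open>\<omega> \<ge> 0\<close> by simp
  have KG00: "0 \<le> KG0" "0 \<le> KH0" by (auto simp: KG0_def KH0_def)
  have cinf: "filterlim c at_top sequentially" by (rule c_to_inf[OF c_pos C2 \<open>\<gamma>0 \<ge> 0\<close>])
  have ev_c: "\<forall>\<^sub>F n in sequentially. 2 \<le> c n" using cinf unfolding filterlim_at_top by auto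
  have ev_n: "\<forall>\<^sub>F n in sequentially. 1 \<le> n" by (rule eventually_ge_at_top)
  have m1: "m \<longlonglongrightarrow> 1"
  proof -
    have "(\<lambda>n. real n * (m n - 1) * (1 / real n)) \<longlonglongrightarrow> a * 0"
      by (intro tendsto_intros D1)
    moreover have "\<forall>\<^sub>F n in sequentially. real n * (m n - 1) * (1 / real n) = m n - 1"
      using ev_n by eventually_elim simp
    ultimately have "(\<lambda>n. m n - 1) \<longlonglongrightarrow> 0" by (simp add: tendsto_cong)
    then have "(\<lambda>n. m n - 1 + 1) \<longlonglongrightarrow> 0 + 1" by (intro tendsto_intros)
    then show ?thesis by simp
  qed
  have "\<forall>\<^sub>F n in sequentially. m n < 2" by (rule order_tendstoD(2)[OF m1]) simp
  then have ev_m: "\<forall>\<^sub>F n in sequentially. m n \<le> 2" by eventually_elim simp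
  have ev_a: "\<forall>\<^sub>F n in sequentially. real n * (m n - 1) < \<bar>a\<bar> + 1" by (rule order_tendstoD(2)[OF D1]) simp
  have ev_w: "\<forall>\<^sub>F n in sequentially. \<omega>n n < \<omega> + 1" by (rule order_tendstoD(2)[OF E1]) simp

  have ev_hyp: "\<forall>\<^sub>F n in sequentially. 1 \<le> n \<and> 2 \<le> c n \<and>
      measure_pmf.expectation (p n) (phi (1 / c n)) \<le> KG0 / (real n)\<^sup>2 \<and>
      measure_pmf.expectation (q n) (phi (1 / c n)) \<le> KH0 / real n \<and>
      pmean (p n) \<le> 2 \<and>
      (\<forall>k<n. (\<integral>\<^sup>+x. ennreal (real (bpi (xi n) (eta n) k x)) \<partial>M n) \<le> ennreal (Cy * real n))"
    using ev_n ev_c KG KH ev_m ev_a ev_w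
  proof eventually_elim
    case (elim n)
    interpret bp "M n" "xi n" "eta n" "p n" "q n" by (rule bpn)
    have n0: "0 < real n" using elim by simp
    have c2: "2 \<le> c n" using elim by simp
    have R2: "(2::real) \<le> 2" by simp
    have pgf1: "pgf r 1 = 1" for r by (simp add: pgf_def)
    have i01: "(1::real) \<in> {0..1}" "(0::real) \<in> {0..1}" by auto
    have "\<bar>G n 1 - G n 0\<bar> \<le> KG * \<bar>1 - 0\<bar>" by (rule bspec[OF bspec[OF elim(3) i01(1)] i01(2)])
    moreover have "G n 0 = 0" by (simp add: G_def pgf1)
    moreover have "G n 1 = - (real n)\<^sup>2 * measure_pmf.expectation (p n) (phi (1 / c n))"
      unfolding G_def phi_expect[OF mean_xi_finite[of n] c2 R2] m_def by (simp add: algebra_simps)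
    ultimately have "(real n)\<^sup>2 * measure_pmf.expectation (p n) (phi (1 / c n)) \<le> KG0"
      unfolding KG0_def by auto
    then have PG: "measure_pmf.expectation (p n) (phi (1 / c n)) \<le> KG0 / (real n)\<^sup>2"
      using n0 by (simp add: field_simps)
    have "\<bar>H n 1 - H n 0\<bar> \<le> KH * \<bar>1 - 0\<bar>" by (rule bspec[OF bspec[OF elim(4) i01(1)] i01(2)])
    moreover have "H n 0 = 0" by (simp add: H_def pgf1)
    moreover have "H n 1 = - real n * measure_pmf.expectation (q n) (phi (1 / c n))"
      unfolding H_def phi_expect[OF mean_eta_finite[of n] c2 R2] \<omega>n_def by (simp add: algebra_simps)
    ultimately have "real n * measure_pmf.expectation (q n) (phi (1 / c n)) \<le> KH0"
      unfolding KH0_def by auto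
    then have PH: "measure_pmf.expectation (q n) (phi (1 / c n)) \<le> KH0 / real n"
      using n0 by (simp add: field_simps)
    have EYn: "(\<integral>\<^sup>+x. ennreal (real (bpi (xi n) (eta n) k x)) \<partial>M n) \<le> ennreal (Cy * real n)" if k: "k < n" for k
    proof -
      let ?M = "max 1 (pmean (p n))"
      have w0: "0 \<le> pmean (q n)" by (rule pmean_nonneg)
      have w1: "pmean (q n) \<le> \<omega> + 1" using elim(7) \<omega>n_def by simp
      have Mle: "?M \<le> 1 + (\<bar>a\<bar> + 1) / real n"
      proof -
        have "real n * (pmean (p n) - 1) \<le> \<bar>a\<bar> + 1" using elim(6) m_def by simp
        then have "pmean (p n) - 1 \<le> (\<bar>a\<bar> + 1) / real n" using n0 by (simp add: field_simps)
        moreover have "0 \<le> (\<bar>a\<bar> + 1) / real n" using n0 by simp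
        ultimately show ?thesis by simp
      qed
      have "?M ^ k \<le> ?M ^ n" using k by (intro power_increasing) auto
      also have "\<dots> \<le> (1 + (\<bar>a\<bar> + 1) / real n) ^ n" by (intro power_mono Mle) auto
      also have "\<dots> \<le> exp (\<bar>a\<bar> + 1)" by (rule exp_ge_one_plus_x_over_n_power_n) (use n0 in auto)
      finally have Mk: "?M ^ k \<le> exp (\<bar>a\<bar> + 1)" .
      have "real k * pmean (q n) * ?M ^ k \<le> real n * (\<omega> + 1) * exp (\<bar>a\<bar> + 1)"
        using k w0 w1 Mk by (intro mult_mono) auto
      then have "ennreal (real k * pmean (q n) * ?M ^ k) \<le> ennreal (Cy * real n)"
        unfolding Cy_def by (intro ennreal_leI) (simp add: mult_ac)
      with EY_bound[of k] show ?thesis by (rule order.trans)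
    qed
    show ?case using elim PG PH EYn m_def by auto
  qed

  have lim_cn: "(\<lambda>n. c n / real n) \<longlonglongrightarrow> 0"
  proof -
    have "(\<lambda>n. inverse (real n / c n)) \<longlonglongrightarrow> 0" by (rule tendsto_inverse_0_at_top[OF C1])
    then show ?thesis by simp
  qed
  have lim_ic: "(\<lambda>n. 1 / c n) \<longlonglongrightarrow> 0"
    using tendsto_inverse_0_at_top[OF cinf] by (simp add: inverse_eq_divide)
  have lim_in: "(\<lambda>n. 1 / real n) \<longlonglongrightarrow> (0::real)" by (rule lim_1_over_n)

  show "(\<lambda>n. measure (M n) {x \<in> space (M n).
           \<bar>(1 / (real n * c n)) * (\<Sum>k\<in>{1..n}.
              (real (bpi (xi n) (eta n) k x) - m n * real (bpi (xi n) (eta n) (k - 1) x) - \<omega>n n)\<^sup>2)\<bar>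
           > \<epsilon>}) \<longlonglongrightarrow> 0"
  proof (rule tendstoI)
    fix \<delta> :: real assume \<delta>: "0 < \<delta>"
    define R where "R = 2 + 8 * (Cy * KG0 + KH0) / \<delta>"
    have R2: "2 \<le> R" unfolding R_def using Cy0 KG00 \<delta> by simp
    have Rt: "2 * (Cy * KG0 + KH0) / R \<le> \<delta> / 4"
    proof -
      have s0: "0 \<le> Cy * KG0 + KH0" using Cy0 KG00 by simp
      have "8 * (Cy * KG0 + KH0) / \<delta> \<le> R" unfolding R_def by simp
      then have "8 * (Cy * KG0 + KH0) \<le> R * \<delta>" using \<delta> by (simp add: field_simps)
      then show ?thesis using R2 \<delta> by (simp add: field_simps)
    qed
    define CR where "CR = 2 * exp 4 + 2 * R"
    define f where "f = (\<lambda>n. Cy / real n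
      + 16 * Cy / \<epsilon> * (CR * KG0 * (c n / real n) + 2 * \<bar>real n * (m n - 1)\<bar> / c n + 4 * KG0 / real n)
      + 16 / \<epsilon> * (CR * KH0 * (c n / real n) + \<omega>n n / c n)
      + 8 * Cy * KG0 * sqrt ((c n / real n) / \<epsilon>))"
    have flim: "f \<longlonglongrightarrow> 0"
    proof -
      have "(\<lambda>n. Cy * (1 / real n)
        + 16 * Cy / \<epsilon> * (CR * KG0 * (c n / real n) + 2 * \<bar>real n * (m n - 1)\<bar> * (1 / c n) + 4 * KG0 * (1 / real n))
        + 16 / \<epsilon> * (CR * KH0 * (c n / real n) + \<omega>n n * (1 / c n))
        + 8 * Cy * KG0 * sqrt ((c n / real n) / \<epsilon>)) \<longlonglongrightarrow>
          Cy * 0 + 16 * Cy / \<epsilon> * (CR * KG0 * 0 + 2 * \<bar>a\<bar> * 0 + 4 * KG0 * 0)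
          + 16 / \<epsilon> * (CR * KH0 * 0 + \<omega> * 0) + 8 * Cy * KG0 * sqrt (0 / \<epsilon>)"
        by (intro tendsto_intros lim_cn lim_ic lim_in D1 E1) (use \<epsilon> in auto)
      then show ?thesis unfolding f_def by simp
    qed
    have ev_f: "\<forall>\<^sub>F n in sequentially. f n < \<delta> / 2" by (rule order_tendstoD(2)[OF flim]) (use \<delta> in simp)
    have ev_5: "\<forall>\<^sub>F n in sequentially. \<not> \<epsilon> \<le> 64 * (c n / real n) * (1 / real n) * KH0\<^sup>2"
    proof -
      have "(\<lambda>n. 64 * (c n / real n) * (1 / real n) * KH0\<^sup>2) \<longlonglongrightarrow> 64 * 0 * 0 * KH0\<^sup>2"
        by (intro tendsto_intros lim_cn lim_in)
      then have "\<forall>\<^sub>F n in sequentially. 64 * (c n / real n) * (1 / real n) * KH0\<^sup>2 < \<epsilon>"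
        by (rule order_tendstoD(2)) (use \<epsilon> in simp)
      then show ?thesis by eventually_elim simp
    qed
    show "\<forall>\<^sub>F n in sequentially. dist (measure (M n) {x \<in> space (M n).
           \<bar>(1 / (real n * c n)) * (\<Sum>k\<in>{1..n}.
              (real (bpi (xi n) (eta n) k x) - m n * real (bpi (xi n) (eta n) (k - 1) x) - \<omega>n n)\<^sup>2)\<bar>
           > \<epsilon>}) 0 < \<delta>"
      using ev_hyp ev_f ev_5
    proof eventually_elim
      case (elim n)
      interpret bp "M n" "xi n" "eta n" "p n" "q n" by (rule bpn)
      have b: "measure (M n) {x \<in> space (M n). \<bar>(1 / (real n * c n)) * (\<Sum>k\<in>{1..n}.
              (real (bpi (xi n) (eta n) k x) - pmean (p n) * real (bpi (xi n) (eta n) (k - 1) x) - pmean (q n))\<^sup>2)\<bar> > \<epsilon>}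
        \<le> Cy / real n + 2 * (Cy * KG0 + KH0) / R
          + 16 * Cy / \<epsilon> * ((2 * exp 4 + 2 * R) * KG0 * (c n / real n) + 2 * \<bar>real n * (pmean (p n) - 1)\<bar> / c n + 4 * KG0 / real n)
          + 16 / \<epsilon> * ((2 * exp 4 + 2 * R) * KH0 * (c n / real n) + pmean (q n) / c n)
          + 8 * Cy * KG0 * sqrt ((c n / real n) / \<epsilon>)
          + (if \<epsilon> \<le> 64 * (c n / real n) * (1 / real n) * KH0\<^sup>2 then 1 else 0)"
      proof -
        have h1: "1 \<le> n" and h2: "2 \<le> c n"
          and h3: "measure_pmf.expectation (p n) (phi (1 / c n)) \<le> KG0 / (real n)\<^sup>2"
          and h4: "measure_pmf.expectation (q n) (phi (1 / c n)) \<le> KH0 / real n"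
          and h5: "pmean (p n) \<le> 2"
          and h6: "\<And>k. k < n \<Longrightarrow> (\<integral>\<^sup>+x. ennreal (real (bpi (xi n) (eta n) k x)) \<partial>M n) \<le> ennreal (Cy * real n)"
          using elim(1) by blast+
        show ?thesis by (rule bound_n[OF h1 h2 R2 \<epsilon> Cy0 KG00(1) KG00(2) h3 h4 h5 h6])
      qed
      have "measure (M n) {x \<in> space (M n). \<bar>(1 / (real n * c n)) * (\<Sum>k\<in>{1..n}.
              (real (bpi (xi n) (eta n) k x) - m n * real (bpi (xi n) (eta n) (k - 1) x) - \<omega>n n)\<^sup>2)\<bar> > \<epsilon>}
          \<le> 2 * (Cy * KG0 + KH0) / R + f n"
        using b elim(3) unfolding f_def CR_def m_def \<omega>n_def by simp
      also have "\<dots> < \<delta>" using Rt elim(2) \<delta> by linarith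
      finally show ?case by simp
    qed
  qed
qed

end
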